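(* Let $L$ be a normalised lattice in $\mathrm{Osc}_1$, $r=r(L)$, $q=\operatorname{ord}(\lambda(L))$. There exists $S\in\mathrm{SO}(2)$ (acting on $\mathbb C\cong\mathbb R^2$) such that $F_S(L)$, where $F_S(\xi,z,t)=(S\xi,z,t)$, is generated by elements $\alpha=(\tfrac1{\sqrt\nu},z_\alpha,0)$, $\beta=(-\tfrac{\mu}{\sqrt\nu}+i\sqrt\nu,z_\beta,0)$, $\gamma=(0,\tfrac1r,0)$ and some $\delta$, for suitable $z_\alpha,z_\beta\in\mathbb R$ and suitable $(\mu,\nu)\in\mathcal F$. If $q=4$ then $\mu+i\nu=i$, and if $q\in\{3,6\}$ then $\mu+i\nu=e^{\pi i/3}$. If moreover $\delta\in F_S(L)$ is chosen so that its projection to the $\mathbb R$-factor equals $\lambda(L)$, then $\alpha,\beta,\gamma,\delta$ are adapted generators of $F_S(L)$.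
   Context: $\mathrm{Osc}_1$ is the set $\mathbb C\times\mathbb R\times\mathbb R$ with multiplication $(\xi_1,z_1,t_1)(\xi_2,z_2,t_2)=(\xi_1+e^{it_1}\xi_2,\ z_1+z_2+\tfrac12\operatorname{Im}(\overline{\xi_1}e^{it_1}\xi_2),\ t_1+t_2)$; $H=\mathbb C\times\mathbb R\times\{0\}$, $Z(H)=\{0\}\times\mathbb R\times\{0\}$. For a lattice $L$: $L\cap H\cong H_1^r(\mathbb Z)=\langle\alpha,\beta,\gamma\mid\alpha\beta\alpha^{-1}\beta^{-1}=\gamma^r,\gamma\text{ central}\rangle$ for a unique $r=r(L)$; the projection of $L$ to the last factor is generated by a unique $\lambda(L)\in\pi\mathbb N_{>0}\cup\bigcup_{\lambda_0\in\{\pi/3,\pi/2,2\pi/3\}}(\lambda_0+2\pi\mathbb Z)$, and $\operatorname{ord}(\lambda)$ is the least $q\ge1$ with $q\lambda\in2\pi\mathbb Z$. $L$ is normalised if the projection of $L\cap H$ to $H/Z(H)\cong\mathbb C$ has covolume one. $\mathcal F=\{(\mu,\nu):\nu>0,\ \mu\in[0,\tfrac12],\ \mu^2+\nu^2\ge1\}\cup\{(\mu,\nu):\nu>0,\ \mu\in(-\tfrac12,0),\ \mu^2+\nu^2>1\}$, identified with $\mu+i\nu$. Generators $\alpha,\beta,\gamma,\delta$ of $L$ are adapted if: the $\mathbb R$-component of $\delta$ is $\lambda(L)$; $\alpha,\beta,\gamma$ generate $L\cap H$ with $\gamma$ central and $\alpha\beta\alpha^{-1}\beta^{-1}=\gamma^r$;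 the matrix of the automorphism induced by conjugation with $\delta$ on $(L\cap H)/Z(L\cap H)\cong\mathbb Z^2$ (basis: classes of $\alpha,\beta$) is one of $I_2,-I_2,\begin{pmatrix}0&-1\\1&-1\end{pmatrix},\begin{pmatrix}0&-1\\1&0\end{pmatrix},\begin{pmatrix}1&-1\\1&0\end{pmatrix}$; and the projections of $\alpha,\beta$ to $\mathbb C\cong\mathbb R^2$ form a positively oriented basis. *)

theory Defs
  imports "HOL-Analysis.Analysis"
begin

type_synonym osc = "complex \<times> real \<times> real"

definition osc_mult :: "osc \<Rightarrow> osc \<Rightarrow> osc" where
  "osc_mult g h = (case g of (\<xi>1, z1, t1) \<Rightarrow> case h of (\<xi>2, z2, t2) \<Rightarrow>
     (\<xi>1 + exp (\<i> * of_real t1) * \<xi>2,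
      z1 + z2 + Im (cnj \<xi>1 * (exp (\<i> * of_real t1) * \<xi>2)) / 2,
      t1 + t2))"

definition osc_one :: osc where "osc_one = (0, 0, 0)"

definition osc_inv :: "osc \<Rightarrow> osc" where
  "osc_inv g = (case g of (\<xi>, z, t) \<Rightarrow> (- (exp (- \<i> * of_real t) * \<xi>), - z, - t))"

definition osc_ipow :: "osc \<Rightarrow> int \<Rightarrow> osc" where
  "osc_ipow g k = (if 0 \<le> k then (osc_mult g ^^ nat k) osc_one
                   else (osc_mult (osc_inv g) ^^ nat (- k)) osc_one)"

definition osc_comm :: "osc \<Rightarrow> osc \<Rightarrow> osc" where
  "osc_comm a b = osc_mult (osc_mult (osc_mult a b) (osc_inv a)) (osc_inv b)"

definition osc_conj :: "osc \<Rightarrow> osc \<Rightarrow> osc" where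
  "osc_conj d a = osc_mult (osc_mult d a) (osc_inv d)"

definition Hset :: "osc set" where "Hset = {g. snd (snd g) = 0}"

definition osc_subgroup :: "osc set \<Rightarrow> bool" where
  "osc_subgroup L \<longleftrightarrow> osc_one \<in> L \<and> (\<forall>x\<in>L. \<forall>y\<in>L. osc_mult x y \<in> L) \<and> (\<forall>x\<in>L. osc_inv x \<in> L)"

inductive_set osc_gen :: "osc set \<Rightarrow> osc set" for A where
  gen_one: "osc_one \<in> osc_gen A"
| gen_base: "a \<in> A \<Longrightarrow> a \<in> osc_gen A"
| gen_mult: "x \<in> osc_gen A \<Longrightarrow> y \<in> osc_gen A \<Longrightarrow> osc_mult x y \<in> osc_gen A"
| gen_inv: "x \<in> osc_gen A \<Longrightarrow> osc_inv x \<in> osc_gen A"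

definition osc_center :: "osc set \<Rightarrow> osc set" where
  "osc_center G = {z \<in> G. \<forall>y\<in>G. osc_mult z y = osc_mult y z}"

definition osc_lattice :: "osc set \<Rightarrow> bool" where
  "osc_lattice L \<longleftrightarrow> osc_subgroup L
     \<and> (\<exists>U. open U \<and> osc_one \<in> U \<and> L \<inter> U = {osc_one})
     \<and> (\<exists>K. compact K \<and> (\<forall>g. \<exists>l\<in>L. \<exists>k\<in>K. g = osc_mult l k))"

text \<open>Concrete model of H_1^r(Z) = <a,b,c | aba^-1b^-1 = c^r, c central> on Z^3:
  a = (1,0,0), b = (0,1,0), c = (0,0,1).\<close>
definition heis_mult :: "nat \<Rightarrow> int \<times> int \<times> int \<Rightarrow> int \<times> int \<times> int \<Rightarrow> int \<times> int \<times> int" where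
  "heis_mult r x y = (case x of (a1, b1, c1) \<Rightarrow> case y of (a2, b2, c2) \<Rightarrow>
      (a1 + a2, b1 + b2, c1 + c2 + int r * a1 * b2))"

definition r_of :: "osc set \<Rightarrow> nat" where
  "r_of L = (THE r. 0 < r \<and> (\<exists>f. bij_betw f (L \<inter> Hset) UNIV \<and>
      (\<forall>x\<in>L \<inter> Hset. \<forall>y\<in>L \<inter> Hset. f (osc_mult x y) = heis_mult r (f x) (f y))))"

definition lambda_set :: "real set" where
  "lambda_set = {pi * real n | n. n > 0}
     \<union> (\<Union>l0\<in>{pi/3, pi/2, 2*pi/3}. {l0 + 2 * pi * of_int k | k. True})"

definition lambda_of :: "osc set \<Rightarrow> real" where
  "lambda_of L = (THE l. l \<in> lambda_set \<and> (\<lambda>g. snd (snd g)) ` L = {of_int k * l | k. True})"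

definition ord_lam :: "real \<Rightarrow> nat" where
  "ord_lam l = (LEAST q. 1 \<le> q \<and> (\<exists>k::int. real q * l = 2 * pi * of_int k))"

definition normalised :: "osc set \<Rightarrow> bool" where
  "normalised L \<longleftrightarrow> (\<exists>u v. fst ` (L \<inter> Hset) = {of_int a * u + of_int b * v | a b. True}
      \<and> \<bar>Im (cnj u * v)\<bar> = 1)"

definition Fdom :: "(real \<times> real) set" where
  "Fdom = {(\<mu>, \<nu>). \<nu> > 0 \<and> 0 \<le> \<mu> \<and> \<mu> \<le> 1/2 \<and> \<mu>^2 + \<nu>^2 \<ge> 1}
        \<union> {(\<mu>, \<nu>). \<nu> > 0 \<and> -1/2 < \<mu> \<and> \<mu> < 0 \<and> \<mu>^2 + \<nu>^2 > 1}"

definition SO2 :: "(real^2^2) set" where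
  "SO2 = {S. orthogonal_matrix S \<and> det S = 1}"

definition rot :: "real^2^2 \<Rightarrow> complex \<Rightarrow> complex" where
  "rot S \<xi> = (let v = S *v vector [Re \<xi>, Im \<xi>] in Complex (v $ 1) (v $ 2))"

definition F_S :: "real^2^2 \<Rightarrow> osc \<Rightarrow> osc" where
  "F_S S g = (case g of (\<xi>, z, t) \<Rightarrow> (rot S \<xi>, z, t))"

text \<open>Allowed matrices (m11, m12, m21, m22) = [[m11,m12],[m21,m22]]:
  I, -I, [[0,-1],[1,-1]], [[0,-1],[1,0]], [[1,-1],[1,0]].\<close>
definition allowed_mats :: "(int \<times> int \<times> int \<times> int) set" where
  "allowed_mats = {(1,0,0,1), (-1,0,0,-1), (0,-1,1,-1), (0,-1,1,0), (1,-1,1,0)}"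

text \<open>The matrix of the automorphism of (L \<inter> H)/Z(L \<inter> H) = Z^2 induced by conjugation
  with d, w.r.t. the basis of classes of a, b (columns are images of basis vectors):
  d a d^-1 = a^m11 b^m21 and d b d^-1 = a^m12 b^m22 modulo the centre.\<close>
definition induced_matrix :: "osc set \<Rightarrow> osc \<Rightarrow> osc \<Rightarrow> osc \<Rightarrow> int \<times> int \<times> int \<times> int \<Rightarrow> bool" where
  "induced_matrix L a b d M = (case M of (m11, m12, m21, m22) \<Rightarrow>
      osc_mult (osc_conj d a) (osc_inv (osc_mult (osc_ipow a m11) (osc_ipow b m21)))
        \<in> osc_center (L \<inter> Hset)
    \<and> osc_mult (osc_conj d b) (osc_inv (osc_mult (osc_ipow a m12) (osc_ipow b m22)))
        \<in> osc_center (L \<inter> Hset))"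

definition adapted :: "osc set \<Rightarrow> osc \<Rightarrow> osc \<Rightarrow> osc \<Rightarrow> osc \<Rightarrow> bool" where
  "adapted L a b c d \<longleftrightarrow>
     osc_gen {a, b, c, d} = L
   \<and> snd (snd d) = lambda_of L
   \<and> osc_gen {a, b, c} = L \<inter> Hset
   \<and> c \<in> osc_center (L \<inter> Hset)
   \<and> osc_comm a b = osc_ipow c (int (r_of L))
   \<and> (\<exists>M\<in>allowed_mats. induced_matrix L a b d M)
   \<and> Im (cnj (fst a) * fst b) > 0"

end

theory Submission
  imports Defs
begin


definition om :: "complex \<Rightarrow> complex \<Rightarrow> real" where "om x y = Im (cnj x * y)"

lemma om_expand: "om x y = Re x * Im y - Im x * Re y"
  by (simp add: om_def)

lemma om_anti: "om y x = - om x y" by (simp add: om_expand)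
lemma om_self[simp]: "om x x = 0" by (simp add: om_expand)

lemma om_lin: "om (of_int m1 * a + of_int n1 * b) (of_int m2 * a + of_int n2 * b)
   = (of_int m1 * of_int n2 - of_int n1 * of_int m2) * om a b"
  by (simp add: om_expand algebra_simps)

lemma om_id: "complex_of_real (om a b) * x = complex_of_real (om x b) * a + complex_of_real (om a x) * b"
  by (simp add: complex_eq_iff om_expand algebra_simps)

lemma om_bound: "\<bar>om x y\<bar> \<le> cmod x * cmod y"
  unfolding om_def by (metis abs_Im_le_cmod complex_mod_cnj norm_mult)

lemma om_rot: "cmod c = 1 \<Longrightarrow> om (c * x) (c * y) = om x y"
proof -
  assume "cmod c = 1"
  hence "Re c ^ 2 + Im c ^ 2 = 1" by (simp add: cmod_def)
  have "om (c * x) (c * y) = (Re c ^ 2 + Im c ^ 2) * om x y"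
    by (simp add: om_expand power2_eq_square) algebra
  thus ?thesis using \<open>Re c ^ 2 + Im c ^ 2 = 1\<close> by simp
qed

lemma om_trace: "om (e * u) v + om u (e * v) = 2 * Re e * om u v"
  by (simp add: om_expand algebra_simps)

lemma osc_mult_simp: "osc_mult (x1, z1, t1) (x2, z2, t2) =
   (x1 + exp (\<i> * of_real t1) * x2, z1 + z2 + om x1 (exp (\<i> * of_real t1) * x2) / 2, t1 + t2)"
  by (simp add: osc_mult_def om_def)

lemma osc_mult0: "osc_mult (x1, z1, 0) (x2, z2, 0) = (x1 + x2, z1 + z2 + om x1 x2 / 2, 0)"
  by (simp add: osc_mult_simp)

lemma osc_inv_simp: "osc_inv (x, z, t) = (- (exp (- \<i> * of_real t) * x), - z, - t)"
  by (simp add: osc_inv_def)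

lemma osc_inv0: "osc_inv (x, z, 0) = (- x, - z, 0)"
  by (simp add: osc_inv_def)

lemma osc_tt_mult: "snd (snd (osc_mult g h)) = snd (snd g) + snd (snd h)"
  by (cases g; cases h) (simp add: osc_mult_def)
lemma osc_tt_inv: "snd (snd (osc_inv g)) = - snd (snd g)"
  by (cases g) (simp add: osc_inv_def)

lemma exp_inv_mult: "exp (\<i> * of_real t) * exp (- \<i> * of_real t) = 1"
  by (simp flip: exp_add)

lemma osc_conj_fst: "snd (snd h) = 0 \<Longrightarrow> fst (osc_conj d h) = exp (\<i> * of_real (snd (snd d))) * fst h"
proof -
  assume h0: "snd (snd h) = 0"
  obtain xd zd td where d: "d = (xd, zd, td)" by (cases d) auto
  obtain x z where h: "h = (x, z, 0)" using h0 by (cases h) auto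
  show ?thesis using exp_inv_mult[of td]
    by (simp add: d h osc_conj_def osc_mult_def osc_inv_def algebra_simps)
qed

lemma osc_conj_tt: "snd (snd (osc_conj d h)) = snd (snd h)"
  by (simp add: osc_conj_def osc_tt_mult osc_tt_inv)

lemma Im_cnj_self: "Im (cnj w * w) = 0" by simp

lemma om_diff_left: "om (a - b) c = om a c - om b c" by (simp add: om_expand algebra_simps)
lemma om_add_left: "om (a + b) c = om a c + om b c" by (simp add: om_expand algebra_simps)
lemma om_add_right: "om c (a + b) = om c a + om c b" by (simp add: om_expand algebra_simps)
lemma om_minus_right: "om c (- a) = - om c a" by (simp add: om_expand algebra_simps)

lemma osc_mult_inv_cancel: "osc_mult (osc_mult h (osc_inv p)) p = h"
proof -
  obtain x z t where h: "h = (x, z, t)" by (cases h) auto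
  obtain y w s where p: "p = (y, w, s)" by (cases p) auto
  define E where "E = exp (\<i> * of_real t) * exp (- \<i> * of_real s)"
  have E: "exp (\<i> * of_real (t - s)) = E" unfolding E_def
    by (simp add: right_diff_distrib exp_diff exp_minus divide_inverse)
  have 1: "osc_mult h (osc_inv p) = (x - E * y, z - w - om x (E * y) / 2, t - s)"
    by (simp add: h p osc_inv_simp osc_mult_simp E_def om_minus_right mult.assoc)
  show ?thesis unfolding 1 using E
    by (simp add: h p osc_mult_simp om_diff_left)
qed

lemma osc_central: "osc_mult (0, z, 0) y = osc_mult y (0, z, 0)"
  by (cases y) (simp add: osc_mult_def)

lemma subgroup_mult: "osc_subgroup L \<Longrightarrow> x \<in> L \<Longrightarrow> y \<in> L \<Longrightarrow> osc_mult x y \<in> L"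
  by (simp add: osc_subgroup_def)
lemma subgroup_inv: "osc_subgroup L \<Longrightarrow> x \<in> L \<Longrightarrow> osc_inv x \<in> L"
  by (simp add: osc_subgroup_def)
lemma subgroup_one: "osc_subgroup L \<Longrightarrow> osc_one \<in> L"
  by (simp add: osc_subgroup_def)

lemma osc_gen_subgroup: "osc_subgroup (osc_gen A)"
  unfolding osc_subgroup_def by (auto intro: osc_gen.intros)

lemma osc_gen_least: "osc_subgroup L \<Longrightarrow> A \<subseteq> L \<Longrightarrow> osc_gen A \<subseteq> L"
proof
  fix x assume L: "osc_subgroup L" and A: "A \<subseteq> L" and "x \<in> osc_gen A"
  from this(3) show "x \<in> L" using A
    by (induction rule: osc_gen.induct) (auto simp: L subgroup_one subgroup_mult subgroup_inv)
qed

lemma osc_gen_mono: "A \<subseteq> B \<Longrightarrow> osc_gen A \<subseteq> osc_gen B"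
  by (rule osc_gen_least[OF osc_gen_subgroup]) (auto intro: osc_gen.intros)

lemma osc_pow_tt: "snd (snd ((osc_mult g ^^ n) osc_one)) = real n * snd (snd g)"
  by (induction n) (simp_all add: osc_one_def osc_tt_mult algebra_simps)

lemma osc_ipow_tt: "snd (snd (osc_ipow g k)) = of_int k * snd (snd g)"
  by (simp add: osc_ipow_def osc_pow_tt osc_tt_inv)

lemma osc_pow_in: "osc_subgroup L \<Longrightarrow> g \<in> L \<Longrightarrow> (osc_mult g ^^ n) osc_one \<in> L"
  by (induction n) (simp_all add: subgroup_one subgroup_mult)

lemma osc_ipow_in: "osc_subgroup L \<Longrightarrow> g \<in> L \<Longrightarrow> osc_ipow g k \<in> L"
  by (simp add: osc_ipow_def osc_pow_in subgroup_inv)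



definition cent :: "'a set \<Rightarrow> ('a \<Rightarrow> 'a \<Rightarrow> 'a) \<Rightarrow> 'a \<Rightarrow> bool" where
  "cent A m z \<longleftrightarrow> z \<in> A \<and> (\<forall>y\<in>A. m z y = m y z)"
definition pw :: "('a \<Rightarrow> 'a \<Rightarrow> 'a) \<Rightarrow> 'a \<Rightarrow> nat \<Rightarrow> 'a" where
  "pw m z n = (m z ^^ n) z"
definition Pq :: "'a set \<Rightarrow> ('a \<Rightarrow> 'a \<Rightarrow> 'a) \<Rightarrow> nat \<Rightarrow> bool" where
  "Pq A m n \<longleftrightarrow> (\<forall>z. cent A m z \<longrightarrow> (\<exists>x\<in>A. \<exists>y\<in>A. m x y = m (pw m z n) (m y x)))"

lemma pw_transport:
  assumes cl: "\<And>x y. x \<in> A \<Longrightarrow> y \<in> A \<Longrightarrow> m x y \<in> A"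
    and hom: "\<And>x y. x \<in> A \<Longrightarrow> y \<in> A \<Longrightarrow> f (m x y) = m' (f x) (f y)"
    and z: "z \<in> A"
  shows "pw m z n \<in> A \<and> f (pw m z n) = pw m' (f z) n"
  unfolding pw_def
proof (induction n)
  case 0 show ?case using z by simp
next
  case (Suc n) thus ?case using z by (simp add: cl hom)
qed

lemma Pq_transport:
  assumes bij: "bij_betw f A B"
    and cl: "\<And>x y. x \<in> A \<Longrightarrow> y \<in> A \<Longrightarrow> m x y \<in> A"
    and hom: "\<And>x y. x \<in> A \<Longrightarrow> y \<in> A \<Longrightarrow> f (m x y) = m' (f x) (f y)"
    and P: "Pq A m n"
  shows "Pq B m' n"
  unfolding Pq_def
proof (intro allI impI)
  fix z' assume c': "cent B m' z'"
  hence z'B: "z' \<in> B" by (simp add: cent_def)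
  then obtain z where zA: "z \<in> A" and fz: "f z = z'" using bij by (auto simp: bij_betw_def)
  have inj: "inj_on f A" using bij by (simp add: bij_betw_def)
  have "cent A m z" unfolding cent_def
  proof (intro conjI ballI)
    show "z \<in> A" by fact
    fix y assume yA: "y \<in> A"
    have "f y \<in> B" using bij yA by (auto simp: bij_betw_def)
    hence "f (m z y) = f (m y z)" using c' hom[OF zA yA] hom[OF yA zA] fz by (simp add: cent_def)
    thus "m z y = m y z" using inj cl zA yA by (meson inj_on_def)
  qed
  then obtain x y where xA: "x \<in> A" and yA: "y \<in> A" and e: "m x y = m (pw m z n) (m y x)"
    using P by (auto simp: Pq_def)
  have pw: "pw m z n \<in> A" "f (pw m z n) = pw m' z' n" using pw_transport[of A m f m' z n, OF cl hom zA] fz by auto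
  have "m' (f x) (f y) = m' (pw m' z' n) (m' (f y) (f x))"
    using arg_cong[OF e, of f] hom[OF xA yA] hom[OF pw(1) cl[OF yA xA]] pw(2) hom[OF yA xA] by simp
  moreover have "f x \<in> B" "f y \<in> B" using bij xA yA by (auto simp: bij_betw_def)
  ultimately show "\<exists>x\<in>B. \<exists>y\<in>B. m' x y = m' (pw m' z' n) (m' y x)" by blast
qed

lemma heis_cent: "0 < r \<Longrightarrow> cent UNIV (heis_mult r) z \<longleftrightarrow> (\<exists>c. z = (0, 0, c))"
proof
  assume r: "0 < r" and c: "cent UNIV (heis_mult r) z"
  obtain a b c where z: "z = (a, b, c)" by (cases z) auto
  have "heis_mult r z (1, 0, 0) = heis_mult r (1, 0, 0) z" "heis_mult r z (0, 1, 0) = heis_mult r (0, 1, 0) z"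
    using c by (auto simp: cent_def)
  hence "b = 0" "a = 0" using r by (auto simp: z heis_mult_def)
  thus "\<exists>c. z = (0, 0, c)" using z by auto
next
  assume "\<exists>c. z = (0, 0, c)"
  thus "cent UNIV (heis_mult r) z" by (auto simp: cent_def heis_mult_def)
qed

lemma heis_pw: "pw (heis_mult r) (0, 0, c) n = (0, 0, int (Suc n) * c)"
  unfolding pw_def by (induction n) (auto simp: heis_mult_def algebra_simps)

lemma heis_Pq: assumes r: "0 < r" shows "Pq UNIV (heis_mult r) n \<longleftrightarrow> int r dvd int (Suc n)"
proof
  assume "Pq UNIV (heis_mult r) n"
  then obtain x y where "heis_mult r x y = heis_mult r (pw (heis_mult r) (0,0,1) n) (heis_mult r y x)"
    using heis_cent[OF r] unfolding Pq_def by blast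
  moreover obtain a1 b1 c1 where "x = (a1, b1, c1)" by (cases x) auto
  moreover obtain a2 b2 c2 where "y = (a2, b2, c2)" by (cases y) auto
  ultimately have "c1 + c2 + int r * a1 * b2 = int (Suc n) * 1 + (c2 + c1 + int r * a2 * b1)"
    by (simp add: heis_pw heis_mult_def)
  hence "int (Suc n) = int r * (a1 * b2 - a2 * b1)" by (simp add: algebra_simps)
  thus "int r dvd int (Suc n)" by (metis dvd_triv_left)
next
  assume d: "int r dvd int (Suc n)"
  then obtain k where k: "int (Suc n) = int r * k" by (auto elim: dvdE)
  show "Pq UNIV (heis_mult r) n" unfolding Pq_def
  proof (intro allI impI)
    fix z assume "cent UNIV (heis_mult r) z"
    then obtain c where z: "z = (0, 0, c)" using heis_cent[OF r] by blast
    have "heis_mult r (1, 0, 0) (0, k * c, 0) = heis_mult r (pw (heis_mult r) z n) (heis_mult r (0, k * c, 0) (1, 0, 0))"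
      using k by (simp add: z heis_pw heis_mult_def algebra_simps)
    thus "\<exists>x\<in>UNIV. \<exists>y\<in>UNIV. heis_mult r x y = heis_mult r (pw (heis_mult r) z n) (heis_mult r y x)" by blast
  qed
qed

lemma inv_hom:
  assumes bij: "bij_betw f A B"
    and cl: "\<And>x y. x \<in> A \<Longrightarrow> y \<in> A \<Longrightarrow> m x y \<in> A"
    and hom: "\<And>x y. x \<in> A \<Longrightarrow> y \<in> A \<Longrightarrow> f (m x y) = m' (f x) (f y)"
  shows "bij_betw (the_inv_into A f) B A"
    and "\<And>x y. x \<in> B \<Longrightarrow> y \<in> B \<Longrightarrow> m' x y \<in> B"
    and "\<And>x y. x \<in> B \<Longrightarrow> y \<in> B \<Longrightarrow> the_inv_into A f (m' x y) = m (the_inv_into A f x) (the_inv_into A f y)"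
proof -
  show b: "bij_betw (the_inv_into A f) B A" using bij by (rule bij_betw_the_inv_into)
  have inj: "inj_on f A" and im: "f ` A = B" using bij by (auto simp: bij_betw_def)
  fix x y assume x: "x \<in> B" and y: "y \<in> B"
  obtain a where a: "a \<in> A" "x = f a" using x im by auto
  obtain b where bb: "b \<in> A" "y = f b" using y im by auto
  have e: "m' x y = f (m a b)" using a bb hom by simp
  show "m' x y \<in> B" unfolding e using a bb cl im by blast
  show "the_inv_into A f (m' x y) = m (the_inv_into A f x) (the_inv_into A f y)"
    unfolding e using a bb cl the_inv_into_f_f[OF inj] by simp
qed

lemma r_unique:
  assumes "0 < r1" "0 < r2"
    and cl: "\<And>x y. x \<in> A \<Longrightarrow> y \<in> A \<Longrightarrow> m x y \<in> A"
    and b1: "bij_betw f1 A UNIV" and h1: "\<And>x y. x \<in> A \<Longrightarrow> y \<in> A \<Longrightarrow> f1 (m x y) = heis_mult r1 (f1 x) (f1 y)"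
    and b2: "bij_betw f2 A UNIV" and h2: "\<And>x y. x \<in> A \<Longrightarrow> y \<in> A \<Longrightarrow> f2 (m x y) = heis_mult r2 (f2 x) (f2 y)"
  shows "r1 = r2"
proof -
  have eq: "Pq UNIV (heis_mult r1) n \<longleftrightarrow> Pq UNIV (heis_mult r2) n" for n
  proof -
    note i1 = inv_hom[of f1 A UNIV m "heis_mult r1", OF b1 cl h1]
    note i2 = inv_hom[of f2 A UNIV m "heis_mult r2", OF b2 cl h2]
    have a: "Pq UNIV (heis_mult r1) n \<Longrightarrow> Pq A m n"
      by (erule Pq_transport[of "the_inv_into A f1" UNIV A "heis_mult r1" m, OF i1(1) i1(2) i1(3), rotated -1])
    have b: "Pq A m n \<Longrightarrow> Pq UNIV (heis_mult r1) n"
      by (erule Pq_transport[of f1 A UNIV m "heis_mult r1", OF b1 cl h1, rotated -1])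
    have c: "Pq UNIV (heis_mult r2) n \<Longrightarrow> Pq A m n"
      by (erule Pq_transport[of "the_inv_into A f2" UNIV A "heis_mult r2" m, OF i2(1) i2(2) i2(3), rotated -1])
    have d: "Pq A m n \<Longrightarrow> Pq UNIV (heis_mult r2) n"
      by (erule Pq_transport[of f2 A UNIV m "heis_mult r2", OF b2 cl h2, rotated -1])
    show ?thesis using a b c d by blast
  qed
  have s1: "Suc (r1 - 1) = r1" "Suc (r2 - 1) = r2" using assms(1,2) by auto
  have "int r2 dvd int r1" using eq[of "r1 - 1"] heis_Pq[of r1 "r1 - 1", OF assms(1)] heis_Pq[of r2 "r1 - 1", OF assms(2)]
    unfolding s1 by simp
  moreover have "int r1 dvd int r2" using eq[of "r2 - 1"] heis_Pq[of r1 "r2 - 1", OF assms(1)] heis_Pq[of r2 "r2 - 1", OF assms(2)]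
    unfolding s1 by simp
  ultimately show ?thesis by (simp add: dvd_antisym)
qed

lemma r_of_eq:
  assumes r: "0 < r" and bij: "bij_betw g UNIV (L \<inter> Hset)"
    and hom: "\<And>x y. g (heis_mult r x y) = osc_mult (g x) (g y)"
  shows "r_of L = r"
proof -
  have cl0: "\<And>x y. x \<in> (UNIV::(int\<times>int\<times>int) set) \<Longrightarrow> y \<in> UNIV \<Longrightarrow> heis_mult r x y \<in> UNIV" by simp
  note ih = inv_hom[of g UNIV "L \<inter> Hset" "heis_mult r" osc_mult, OF bij cl0 hom]
  let ?P = "\<lambda>r. 0 < r \<and> (\<exists>f. bij_betw f (L \<inter> Hset) UNIV \<and>
      (\<forall>x\<in>L \<inter> Hset. \<forall>y\<in>L \<inter> Hset. f (osc_mult x y) = heis_mult r (f x) (f y)))"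
  have P: "?P r" using r ih by blast
  have U: "?P r' \<Longrightarrow> r' = r" for r'
  proof -
    assume "?P r'"
    then obtain f where "0 < r'" "bij_betw f (L \<inter> Hset) UNIV"
      "\<forall>x\<in>L \<inter> Hset. \<forall>y\<in>L \<inter> Hset. f (osc_mult x y) = heis_mult r' (f x) (f y)" by blast
    moreover have "\<And>x y. x \<in> L \<inter> Hset \<Longrightarrow> y \<in> L \<inter> Hset \<Longrightarrow> osc_mult x y \<in> L \<inter> Hset"
      using ih(2) by blast
    ultimately show "r' = r" using r_unique[of r' r "L \<inter> Hset" osc_mult f "the_inv_into UNIV g"] ih(1,3) r by blast
  qed
  show ?thesis unfolding r_of_def by (rule the_equality[of ?P, OF P U])
qed



locale good =
  fixes L :: "osc set" and a b :: complex and za zb :: real and r :: nat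
  assumes sg: "osc_subgroup L"
    and r: "0 < r"
    and Z0: "\<And>z. (0, z, 0) \<in> L \<longleftrightarrow> (\<exists>c::int. z = of_int c / real r)"
    and Lam: "fst ` (L \<inter> Hset) = {of_int s * a + of_int t * b | s t. True}"
    and omab: "om a b = 1"
    and aL: "(a, za, 0) \<in> L" and bL: "(b, zb, 0) \<in> L"
begin

definition g :: "int \<times> int \<times> int \<Rightarrow> osc" where
  "g x = (case x of (m, n, c) \<Rightarrow> (of_int m * a + of_int n * b,
      of_int m * za + of_int n * zb - of_int m * of_int n / 2 + of_int c / real r, 0))"

lemma g_simp: "g (m, n, c) = (of_int m * a + of_int n * b,
      of_int m * za + of_int n * zb - of_int m * of_int n / 2 + of_int c / real r, 0)"
  by (simp add: g_def)

lemma g_hom: "g (heis_mult r x y) = osc_mult (g x) (g y)"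
proof -
  obtain m1 n1 c1 where x: "x = (m1, n1, c1)" by (cases x) auto
  obtain m2 n2 c2 where y: "y = (m2, n2, c2)" by (cases y) auto
  have rr: "real_of_int (int r * m1 * n2) / real r = of_int m1 * of_int n2" using r by simp
  have "of_int (m1 + m2) * za + of_int (n1 + n2) * zb - of_int (m1 + m2) * of_int (n1 + n2) / 2
      + of_int (c1 + c2 + int r * m1 * n2) / real r
     = of_int m1 * za + of_int n1 * zb - of_int m1 * of_int n1 / 2 + of_int c1 / real r +
       (of_int m2 * za + of_int n2 * zb - of_int m2 * of_int n2 / 2 + of_int c2 / real r) +
       (of_int m1 * of_int n2 - of_int n1 * of_int m2) * 1 / 2"
    using rr by (simp only: of_int_add add_divide_distrib) (simp add: ring_distribs diff_divide_distrib add_divide_distrib)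
  moreover have "om (of_int m1 * a + of_int n1 * b) (of_int m2 * a + of_int n2 * b) = (of_int m1 * of_int n2 - of_int n1 * of_int m2) * 1"
    using om_lin omab by simp
  moreover have "of_int (m1+m2) * a + of_int (n1+n2) * b = (of_int m1 * a + of_int n1 * b) + (of_int m2 * a + of_int n2 * b)"
    by (simp add: algebra_simps)
  ultimately show ?thesis
    by (simp add: x y heis_mult_def g_simp osc_mult0)
qed

lemma g_zero: "g (0, 0, 0) = osc_one" by (simp add: g_simp osc_one_def)

lemma g_in:
  assumes G: "osc_subgroup G" and a: "(a, za, 0) \<in> G" and b: "(b, zb, 0) \<in> G"
    and c: "(0, 1 / real r, 0) \<in> G"
  shows "g x \<in> G"
proof -
  have ga: "g (1, 0, 0) = (a, za, 0)" and gai: "g (-1, 0, 0) = osc_inv (a, za, 0)"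
    by (simp_all add: g_simp osc_inv0)
  have gb: "g (0, 1, 0) = (b, zb, 0)" and gbi: "g (0, -1, 0) = osc_inv (b, zb, 0)"
    by (simp_all add: g_simp osc_inv0)
  have gc: "g (0, 0, 1) = (0, 1 / real r, 0)" and gci: "g (0, 0, -1) = osc_inv (0, 1 / real r, 0)"
    by (simp_all add: g_simp osc_inv0)
  have A: "g (m, 0, 0) \<in> G" for m
  proof (induction m rule: int_induct[where k = 0])
    case base show ?case using G g_zero subgroup_one by simp
  next
    case (step1 i)
    have "g (i + 1, 0, 0) = osc_mult (g (i, 0, 0)) (g (1, 0, 0))"
      by (simp add: g_hom[symmetric] heis_mult_def)
    thus ?case using step1 subgroup_mult[OF G] a ga by simp
  next
    case (step2 i)
    have "g (i - 1, 0, 0) = osc_mult (g (i, 0, 0)) (g (-1, 0, 0))"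
      by (simp add: g_hom[symmetric] heis_mult_def)
    thus ?case using step2 subgroup_mult[OF G] subgroup_inv[OF G] a gai by simp
  qed
  have B: "g (0, n, 0) \<in> G" for n
  proof (induction n rule: int_induct[where k = 0])
    case base show ?case using G g_zero subgroup_one by simp
  next
    case (step1 i)
    have "g (0, i + 1, 0) = osc_mult (g (0, i, 0)) (g (0, 1, 0))"
      by (simp add: g_hom[symmetric] heis_mult_def)
    thus ?case using step1 subgroup_mult[OF G] b gb by simp
  next
    case (step2 i)
    have "g (0, i - 1, 0) = osc_mult (g (0, i, 0)) (g (0, -1, 0))"
      by (simp add: g_hom[symmetric] heis_mult_def)
    thus ?case using step2 subgroup_mult[OF G] subgroup_inv[OF G] b gbi by simp
  qed
  have Cc: "g (0, 0, k) \<in> G" for k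
  proof (induction k rule: int_induct[where k = 0])
    case base show ?case using G g_zero subgroup_one by simp
  next
    case (step1 i)
    have "g (0, 0, i + 1) = osc_mult (g (0, 0, i)) (g (0, 0, 1))"
      by (simp add: g_hom[symmetric] heis_mult_def)
    thus ?case using step1 subgroup_mult[OF G] c gc by simp
  next
    case (step2 i)
    have "g (0, 0, i - 1) = osc_mult (g (0, 0, i)) (g (0, 0, -1))"
      by (simp add: g_hom[symmetric] heis_mult_def)
    thus ?case using step2 subgroup_mult[OF G] subgroup_inv[OF G] c gci by simp
  qed
  obtain m n k where x: "x = (m, n, k)" by (cases x) auto
  have "g x = osc_mult (osc_mult (g (0, n, 0)) (g (m, 0, 0))) (g (0, 0, k))"
    by (simp add: x g_hom[symmetric] heis_mult_def)
  thus ?thesis using A B Cc subgroup_mult[OF G] by simp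
qed

lemma gammaL: "(0, 1 / real r, 0) \<in> L" using Z0[of "1 / real r"] by (metis of_int_1)

lemma g_L: "g x \<in> L" by (rule g_in[OF sg aL bL gammaL])

lemma coords: "x = of_int s * a + of_int t * b \<Longrightarrow> om x b = of_int s \<and> om a x = of_int t"
  using om_lin[of s a t b 0 1] om_lin[of 1 a 0 b s t] omab by simp

lemma g_bij: "bij_betw g UNIV (L \<inter> Hset)"
  unfolding bij_betw_def
proof (intro conjI)
  show "inj g"
  proof (rule injI)
    fix x y assume e: "g x = g y"
    obtain m1 n1 c1 where x: "x = (m1, n1, c1)" by (cases x) auto
    obtain m2 n2 c2 where y: "y = (m2, n2, c2)" by (cases y) auto
    have "of_int m1 * a + of_int n1 * b = of_int m2 * a + of_int n2 * b" using e by (simp add: x y g_simp)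
    from coords[OF this] coords[OF refl, of m1 n1] have mn: "m1 = m2" "n1 = n2" by auto
    hence "of_int c1 / real r = of_int c2 / real r" using e by (simp add: x y g_simp)
    hence "c1 = c2" using r by (simp add: divide_cancel_right)
    thus "x = y" using x y mn by simp
  qed
next
  show "range g = L \<inter> Hset"
  proof
    show "range g \<subseteq> L \<inter> Hset" using g_L by (auto simp: g_def Hset_def split: prod.splits)
  next
    show "L \<inter> Hset \<subseteq> range g"
    proof
      fix h assume h: "h \<in> L \<inter> Hset"
      obtain x z where hx: "h = (x, z, 0)" using h by (cases h) (auto simp: Hset_def)
      have "x \<in> fst ` (L \<inter> Hset)" using h hx by force
      then obtain m n where xm: "x = of_int m * a + of_int n * b" using Lam by auto
      let ?p = "g (m, n, 0)"
      have "osc_mult h (osc_inv ?p) \<in> L" using h g_L subgroup_mult[OF sg] subgroup_inv[OF sg] by auto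
      moreover have "osc_mult h (osc_inv ?p) = (0, z - (of_int m * za + of_int n * zb - of_int m * of_int n / 2), 0)"
        by (simp add: hx g_simp osc_inv0 osc_mult0 xm om_expand algebra_simps)
      ultimately obtain c :: int where c: "z - (of_int m * za + of_int n * zb - of_int m * of_int n / 2) = of_int c / real r"
        using Z0 by auto
      have "h = g (m, n, c)" using c by (simp add: hx g_simp xm algebra_simps)
      thus "h \<in> range g" by simp
    qed
  qed
qed

lemma r_of_L: "r_of L = r"
  by (rule r_of_eq[OF r g_bij g_hom])

end


lemma mult_inv0: "snd (snd X) = 0 \<Longrightarrow> snd (snd Y) = 0 \<Longrightarrow> \<exists>z. osc_mult X (osc_inv Y) = (fst X - fst Y, z, 0)"
  by (cases X; cases Y) (auto simp: osc_inv0 osc_mult0)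

lemma Hset_subgroup: "osc_subgroup Hset"
  by (auto simp: osc_subgroup_def Hset_def osc_one_def osc_tt_mult osc_tt_inv)

lemma subgroup_Int: "osc_subgroup A \<Longrightarrow> osc_subgroup B \<Longrightarrow> osc_subgroup (A \<inter> B)"
  by (auto simp: osc_subgroup_def)

lemma center0: "(0, z, 0) \<in> G \<Longrightarrow> (0, z, 0) \<in> osc_center G"
  by (auto simp: osc_center_def osc_central)

context good begin

abbreviation "\<alpha> \<equiv> (a, za, 0::real)"
abbreviation "\<beta> \<equiv> (b, zb, 0::real)"
abbreviation "\<gamma> \<equiv> (0::complex, 1 / real r, 0::real)"

lemma pow_a: "(osc_mult \<alpha> ^^ n) osc_one = g (int n, 0, 0)"
proof (induction n)
  case 0 show ?case by (simp add: g_zero)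
next
  case (Suc n)
  have "g (int (Suc n), 0, 0) = osc_mult (g (1, 0, 0)) (g (int n, 0, 0))"
    by (simp add: g_hom[symmetric] heis_mult_def)
  thus ?case using Suc by (simp add: g_simp)
qed

lemma pow_ai: "(osc_mult (osc_inv \<alpha>) ^^ n) osc_one = g (- int n, 0, 0)"
proof (induction n)
  case 0 show ?case by (simp add: g_zero)
next
  case (Suc n)
  have "g (- int (Suc n), 0, 0) = osc_mult (g (-1, 0, 0)) (g (- int n, 0, 0))"
    by (simp add: g_hom[symmetric] heis_mult_def)
  thus ?case using Suc by (simp add: g_simp osc_inv0)
qed

lemma ipow_a: "osc_ipow \<alpha> k = g (k, 0, 0)"
  by (simp add: osc_ipow_def pow_a pow_ai)

lemma pow_b: "(osc_mult \<beta> ^^ n) osc_one = g (0, int n, 0)"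
proof (induction n)
  case 0 show ?case by (simp add: g_zero)
next
  case (Suc n)
  have "g (0, int (Suc n), 0) = osc_mult (g (0, 1, 0)) (g (0, int n, 0))"
    by (simp add: g_hom[symmetric] heis_mult_def)
  thus ?case using Suc by (simp add: g_simp)
qed

lemma pow_bi: "(osc_mult (osc_inv \<beta>) ^^ n) osc_one = g (0, - int n, 0)"
proof (induction n)
  case 0 show ?case by (simp add: g_zero)
next
  case (Suc n)
  have "g (0, - int (Suc n), 0) = osc_mult (g (0, -1, 0)) (g (0, - int n, 0))"
    by (simp add: g_hom[symmetric] heis_mult_def)
  thus ?case using Suc by (simp add: g_simp osc_inv0)
qed

lemma ipow_b: "osc_ipow \<beta> k = g (0, k, 0)"
  by (simp add: osc_ipow_def pow_b pow_bi)

lemma pow_c: "(osc_mult \<gamma> ^^ n) osc_one = g (0, 0, int n)"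
proof (induction n)
  case 0 show ?case by (simp add: g_zero)
next
  case (Suc n)
  have "g (0, 0, int (Suc n)) = osc_mult (g (0, 0, 1)) (g (0, 0, int n))"
    by (simp add: g_hom[symmetric] heis_mult_def)
  thus ?case using Suc by (simp add: g_simp)
qed

lemma comm_ab: "osc_comm \<alpha> \<beta> = osc_ipow \<gamma> (int r)"
proof -
  have "osc_comm \<alpha> \<beta> = osc_mult (osc_mult (osc_mult (g (1,0,0)) (g (0,1,0))) (g (-1,0,0))) (g (0,-1,0))"
    by (simp add: osc_comm_def g_simp osc_inv0)
  also have "\<dots> = g (0, 0, int r)" by (simp add: g_hom[symmetric] heis_mult_def)
  finally show ?thesis by (simp add: osc_ipow_def pow_c)
qed

lemma gen3: "osc_gen {\<alpha>, \<beta>, \<gamma>} = L \<inter> Hset"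
proof
  show "osc_gen {\<alpha>, \<beta>, \<gamma>} \<subseteq> L \<inter> Hset"
    using osc_gen_least[OF subgroup_Int[OF sg Hset_subgroup]] aL bL gammaL by (auto simp: Hset_def)
next
  have "g x \<in> osc_gen {\<alpha>, \<beta>, \<gamma>}" for x
    by (rule g_in[OF osc_gen_subgroup]) (auto intro: osc_gen.gen_base)
  moreover have "L \<inter> Hset \<subseteq> range g" using g_bij by (simp add: bij_betw_def)
  ultimately show "L \<inter> Hset \<subseteq> osc_gen {\<alpha>, \<beta>, \<gamma>}" by blast
qed

lemma gamma_center: "\<gamma> \<in> osc_center (L \<inter> Hset)"
  using gammaL by (intro center0) (simp add: Hset_def)

lemma adapted_good:
  assumes T: "(\<lambda>g. snd (snd g)) ` L = {of_int k * lam | k. True}"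
    and lamL: "lambda_of L = lam"
    and d: "d \<in> L" and dt: "snd (snd d) = lam"
    and M: "(m11, m12, m21, m22) \<in> allowed_mats"
    and e1: "exp (\<i> * of_real lam) * a = of_int m11 * a + of_int m21 * b"
    and e2: "exp (\<i> * of_real lam) * b = of_int m12 * a + of_int m22 * b"
  shows "adapted L \<alpha> \<beta> \<gamma> d"
proof -
  have g4: "osc_gen {\<alpha>, \<beta>, \<gamma>, d} = L"
  proof
    show "osc_gen {\<alpha>, \<beta>, \<gamma>, d} \<subseteq> L" using osc_gen_least[OF sg] aL bL gammaL d by auto
  next
    show "L \<subseteq> osc_gen {\<alpha>, \<beta>, \<gamma>, d}"
    proof
      fix h assume h: "h \<in> L"
      then obtain k where k: "snd (snd h) = of_int k * lam" using T by blast
      let ?p = "osc_ipow d k"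
      have pL: "?p \<in> L" by (rule osc_ipow_in[OF sg d])
      have pG: "?p \<in> osc_gen {\<alpha>, \<beta>, \<gamma>, d}" by (rule osc_ipow_in[OF osc_gen_subgroup]) (auto intro: osc_gen.gen_base)
      have "osc_mult h (osc_inv ?p) \<in> L \<inter> Hset"
        using subgroup_mult[OF sg h subgroup_inv[OF sg pL]] k dt
        by (simp add: Hset_def osc_tt_mult osc_tt_inv osc_ipow_tt)
      hence "osc_mult h (osc_inv ?p) \<in> osc_gen {\<alpha>, \<beta>, \<gamma>, d}"
        using gen3 osc_gen_mono[of "{\<alpha>, \<beta>, \<gamma>}" "{\<alpha>, \<beta>, \<gamma>, d}"] by auto
      hence "osc_mult (osc_mult h (osc_inv ?p)) ?p \<in> osc_gen {\<alpha>, \<beta>, \<gamma>, d}"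
        using pG by (rule osc_gen.gen_mult)
      thus "h \<in> osc_gen {\<alpha>, \<beta>, \<gamma>, d}" by (simp add: osc_mult_inv_cancel)
    qed
  qed
  have im: "induced_matrix L \<alpha> \<beta> d (m11, m12, m21, m22)"
  proof -
    have key: "osc_mult (osc_conj d h) (osc_inv (osc_mult (osc_ipow \<alpha> i) (osc_ipow \<beta> j))) \<in> osc_center (L \<inter> Hset)"
      if hL: "h \<in> L" and h0: "snd (snd h) = 0" and eq: "exp (\<i> * of_real lam) * fst h = of_int i * a + of_int j * b"
      for h i j
    proof -
      have P: "osc_mult (osc_ipow \<alpha> i) (osc_ipow \<beta> j) = g (i, j, int r * i * j)"
        by (simp add: ipow_a ipow_b g_hom[symmetric] heis_mult_def)
      have cL: "osc_conj d h \<in> L" unfolding osc_conj_def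
        using sg d hL by (simp add: subgroup_mult subgroup_inv)
      have XL: "osc_mult (osc_conj d h) (osc_inv (osc_mult (osc_ipow \<alpha> i) (osc_ipow \<beta> j))) \<in> L"
        unfolding P using cL g_L sg by (simp add: subgroup_mult subgroup_inv)
      obtain z where z: "osc_mult (osc_conj d h) (osc_inv (g (i, j, int r * i * j))) =
          (fst (osc_conj d h) - fst (g (i, j, int r * i * j)), z, 0)"
        using mult_inv0[of "osc_conj d h" "g (i, j, int r * i * j)"] h0
        by (auto simp: osc_conj_tt g_simp)
      have "fst (osc_conj d h) - fst (g (i, j, int r * i * j)) = 0"
        using osc_conj_fst[OF h0, of d] dt eq by (simp add: g_simp)
      hence "osc_mult (osc_conj d h) (osc_inv (osc_mult (osc_ipow \<alpha> i) (osc_ipow \<beta> j))) = (0, z, 0)"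
        using z P by simp
      thus ?thesis using XL center0[of z "L \<inter> Hset"] by (simp add: Hset_def)
    qed
    show ?thesis unfolding induced_matrix_def
      using key[of \<alpha> m11 m21] key[of \<beta> m12 m22] aL bL e1 e2 by simp
  qed
  have "lambda_of L = snd (snd d)" using lamL dt by simp
  moreover have "Im (cnj (fst \<alpha>) * fst \<beta>) > 0" using omab by (simp add: om_def)
  ultimately show ?thesis unfolding adapted_def
    using g4 gen3 gamma_center comm_ab r_of_L im M by auto
qed

end


definition latt :: "complex \<Rightarrow> complex \<Rightarrow> complex set" where
  "latt u v = {of_int s * u + of_int t * v | s t. True}"

lemma latt_int:
  assumes uv: "\<bar>om u v\<bar> = 1" and x: "x \<in> latt u v" and y: "y \<in> latt u v"
  shows "\<exists>k::int. om x y = of_int k"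
proof -
  obtain s t where xs: "x = of_int s * u + of_int t * v" using x by (auto simp: latt_def)
  obtain p q where yp: "y = of_int p * u + of_int q * v" using y by (auto simp: latt_def)
  have "om u v = 1 \<or> om u v = -1" using uv by auto
  hence "om x y = of_int (s * q - t * p) \<or> om x y = of_int (- (s * q - t * p))"
    unfolding xs yp om_lin by auto
  thus ?thesis by blast
qed

lemma latt_comb:
  assumes x: "x \<in> latt u v" and y: "y \<in> latt u v"
  shows "of_int p * x + of_int q * y \<in> latt u v"
proof -
  obtain s t where xs: "x = of_int s * u + of_int t * v" using x by (auto simp: latt_def)
  obtain s' t' where ys: "y = of_int s' * u + of_int t' * v" using y by (auto simp: latt_def)
  have "of_int p * x + of_int q * y = of_int (p * s + q * s') * u + of_int (p * t + q * t') * v"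
    by (simp add: xs ys algebra_simps)
  thus ?thesis unfolding latt_def by blast
qed

lemma latt_u: "u \<in> latt u v"
proof -
  have "u = of_int 1 * u + of_int 0 * v" by simp
  thus ?thesis unfolding latt_def by blast
qed
lemma latt_v: "v \<in> latt u v"
proof -
  have "v = of_int 0 * u + of_int 1 * v" by simp
  thus ?thesis unfolding latt_def by blast
qed

lemma latt_finite:
  assumes uv: "\<bar>om u v\<bar> = 1"
  shows "finite {x \<in> latt u v. cmod x \<le> R}"
proof -
  define N where "N = \<lceil>R * (cmod u + cmod v)\<rceil>"
  have "{x \<in> latt u v. cmod x \<le> R} \<subseteq> (\<lambda>(s, t). of_int s * u + of_int t * v) ` ({-N..N} \<times> {-N..N})"
  proof
    fix x assume "x \<in> {x \<in> latt u v. cmod x \<le> R}"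
    then obtain s t where xs: "x = of_int s * u + of_int t * v" and R: "cmod x \<le> R" by (auto simp: latt_def)
    have "om x v = of_int s * om u v" "om u x = of_int t * om u v"
      using om_lin[of s u t v 0 1] om_lin[of 1 u 0 v s t] xs by simp_all
    hence "\<bar>of_int s\<bar> = \<bar>om x v\<bar>" "\<bar>of_int t\<bar> = \<bar>om u x\<bar>" using uv by (simp_all add: abs_mult)
    moreover have "\<bar>om x v\<bar> \<le> R * (cmod u + cmod v)"
      using om_bound[of x v] R mult_right_mono[OF R, of "cmod v"] by (smt (verit) mult_left_mono norm_ge_zero)
    moreover have "\<bar>om u x\<bar> \<le> R * (cmod u + cmod v)"
      using om_bound[of u x] R mult_left_mono[OF R, of "cmod u"] by (smt (verit) mult_left_mono norm_ge_zero mult.commute)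
    ultimately have "\<bar>of_int s\<bar> \<le> R * (cmod u + cmod v)" "\<bar>of_int t\<bar> \<le> R * (cmod u + cmod v)" by simp_all
    hence "\<bar>s\<bar> \<le> N" "\<bar>t\<bar> \<le> N" unfolding N_def by (simp_all add: le_ceiling_iff)
    thus "x \<in> (\<lambda>(s, t). of_int s * u + of_int t * v) ` ({-N..N} \<times> {-N..N})"
      using xs by force
  qed
  thus ?thesis by (rule finite_subset) auto
qed

lemma Im_div: "Im (b / a) = om a b / (cmod a)^2"
  by (simp add: om_def Im_divide cmod_def algebra_simps power2_eq_square)

lemma reduction:
  assumes uv: "\<bar>om u v\<bar> = 1"
  shows "\<exists>a b \<mu> \<nu>. a \<in> latt u v \<and> b \<in> latt u v \<and> om a b = 1 \<and> b = a * Complex (- \<mu>) \<nu> \<and> (\<mu>, \<nu>) \<in> Fdom"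
proof -
  let ?L = "latt u v"
  define P where "P = {x \<in> ?L. \<exists>y\<in>?L. om x y = 1}"
  obtain p0 where p0: "p0 \<in> P"
  proof (cases "om u v = 1")
    case True thus ?thesis using that latt_u latt_v unfolding P_def by blast
  next
    case False hence "om v u = 1" using uv om_anti[of v u] by auto
    thus ?thesis using that latt_u latt_v unfolding P_def by blast
  qed
  define S where "S = {x \<in> P. cmod x \<le> cmod p0}"
  have fS: "finite S" unfolding S_def P_def
    by (rule finite_subset[OF _ latt_finite[OF uv, of "cmod p0"]]) auto
  have "S \<noteq> {}" using p0 by (auto simp: S_def)
  then obtain a where aS: "a \<in> S" and amin: "\<forall>y\<in>S. cmod a \<le> cmod y"
    using ex_min_if_finite[of "cmod ` S"] fS by (metis (no_types, lifting) finite_imageI image_iff image_is_empty not_le)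
  have aP: "a \<in> P" using aS by (simp add: S_def)
  have amin': "cmod a \<le> cmod y" if "y \<in> P" for y
    using amin aS that by (cases "cmod y \<le> cmod p0") (auto simp: S_def)
  obtain b0 where b0: "b0 \<in> ?L" "om a b0 = 1" using aP by (auto simp: P_def)
  have aL: "a \<in> ?L" using aP by (simp add: P_def)
  have a0: "a \<noteq> 0" using b0 by (auto simp: om_def)
  define k where "k = \<lfloor>Re (b0 / a) + 1/2\<rfloor>"
  define b1 where "b1 = b0 - of_int k * a"
  have b1L: "b1 \<in> ?L" using latt_comb[OF b0(1) aL, of 1 "-k"] by (simp add: b1_def)
  have omb1: "om a b1 = 1" using b0 by (simp add: b1_def om_expand algebra_simps)
  have maL: "- a \<in> ?L" using latt_comb[OF aL aL, of "-1" 0] by simp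
  have "om b1 (- a) = 1" using omb1 by (simp add: om_expand algebra_simps)
  hence b1P: "b1 \<in> P" unfolding P_def using b1L maL by blast
  have ab1: "cmod a \<le> cmod b1" using amin'[OF b1P] .
  define w where "w = b1 / a"
  have b1w: "b1 = a * w" using a0 by (simp add: w_def)
  have Rew: "Re w = Re (b0 / a) - of_int k" using a0 by (simp add: w_def b1_def diff_divide_distrib)
  have Re1: "- 1/2 \<le> Re w" "Re w < 1/2" unfolding Rew k_def by linarith+
  have Imw: "Im w > 0" unfolding w_def Im_div omb1 using a0 by simp
  have w1: "cmod w \<ge> 1" using ab1 a0 by (simp add: w_def norm_divide)
  have w2: "Re w ^ 2 + Im w ^ 2 = (cmod w)^2" by (simp add: cmod_def)
  have wC: "w = Complex (- (- Re w)) (Im w)" by (simp add: complex_eq_iff)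
  show ?thesis
  proof (cases "Re w \<le> 0")
    case True
    have "1 \<le> (cmod w)^2" using w1 by (rule one_le_power)
    hence "(- Re w)^2 + Im w ^ 2 \<ge> 1" using w2 by simp
    hence "(- Re w, Im w) \<in> Fdom" unfolding Fdom_def using True Re1 Imw by auto
    thus ?thesis using aL b1L omb1 b1w wC by metis
  next
    case False
    show ?thesis
    proof (cases "cmod w > 1")
      case True
      have "1 < (cmod w)^2" using True by (rule one_less_power) simp
      hence "(- Re w)^2 + Im w ^ 2 > 1" using w2 by simp
      hence "(- Re w, Im w) \<in> Fdom" unfolding Fdom_def using False Re1 Imw by auto
      thus ?thesis using aL b1L omb1 b1w wC by metis
    next
      case False2: False
      hence wn: "cmod w = 1" using w1 by simp
      hence wn2: "Re w ^ 2 + Im w ^ 2 = 1" using w2 by simp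
      have "(Re w, Im w) \<in> Fdom" unfolding Fdom_def using False Re1 Imw wn2 by auto
      moreover have "om b1 (- a) = 1" using omb1 by (simp add: om_expand algebra_simps)
      moreover have "- a = b1 * Complex (- Re w) (Im w)"
      proof -
        have "Complex (- Re w) (Im w) = - cnj w" by (simp add: complex_eq_iff)
        moreover have "w * cnj w = 1" using wn complex_norm_square[of w] by simp
        ultimately show ?thesis unfolding b1w by (simp add: mult.assoc)
      qed
      ultimately show ?thesis using b1L maL by metis
    qed
  qed
qed

lemma latt_basis:
  assumes uv: "\<bar>om u v\<bar> = 1" and a: "a \<in> latt u v" and b: "b \<in> latt u v" and ab: "om a b = 1"
  shows "latt u v = latt a b"
proof
  show "latt a b \<subseteq> latt u v"
    using latt_comb[OF a b] by (auto simp: latt_def)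
next
  show "latt u v \<subseteq> latt a b"
  proof
    fix x assume x: "x \<in> latt u v"
    obtain s where s: "om x b = of_int s" using latt_int[OF uv x b] by blast
    obtain t where t: "om a x = of_int t" using latt_int[OF uv a x] by blast
    have "x = of_int s * a + of_int t * b" using om_id[of a b x] ab s t by simp
    thus "x \<in> latt a b" unfolding latt_def by blast
  qed
qed



lemma lambda_set_iff: "x \<in> lambda_set \<longleftrightarrow> (\<exists>n::nat. n > 0 \<and> x = pi * real n) \<or> (\<exists>k::int. x = pi/3 + 2 * pi * of_int k)
   \<or> (\<exists>k::int. x = pi/2 + 2 * pi * of_int k) \<or> (\<exists>k::int. x = 2*pi/3 + 2 * pi * of_int k)"
  unfolding lambda_set_def by auto

lemma lambda_set_char: "x \<in> lambda_set \<longleftrightarrow>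
   (\<exists>m::int. x = pi * of_int m / 6 \<and> ((m > 0 \<and> 6 dvd m) \<or> m mod 12 \<in> {2,3,4}))"
proof
  assume "x \<in> lambda_set"
  then consider (a) n :: nat where "n > 0" "x = pi * real n"
    | (b) k :: int where "x = pi/3 + 2 * pi * of_int k"
    | (c) k :: int where "x = pi/2 + 2 * pi * of_int k"
    | (d) k :: int where "x = 2*pi/3 + 2 * pi * of_int k"
    unfolding lambda_set_iff by blast
  thus "\<exists>m::int. x = pi * of_int m / 6 \<and> ((m > 0 \<and> 6 dvd m) \<or> m mod 12 \<in> {2,3,4})"
  proof cases
    case a thus ?thesis by (intro exI[of _ "6 * int n"]) auto
  next
    case b
    have "x = pi * of_int (2 + 12 * k) / 6" using b by (simp add: field_simps)
    moreover have "(2 + 12 * k) mod 12 = 2" by presburger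
    ultimately show ?thesis by blast
  next
    case c
    have "x = pi * of_int (3 + 12 * k) / 6" using c by (simp add: field_simps)
    moreover have "(3 + 12 * k) mod 12 = 3" by presburger
    ultimately show ?thesis by blast
  next
    case d
    have "x = pi * of_int (4 + 12 * k) / 6" using d by (simp add: field_simps)
    moreover have "(4 + 12 * k) mod 12 = 4" by presburger
    ultimately show ?thesis by blast
  qed
next
  assume "\<exists>m::int. x = pi * of_int m / 6 \<and> ((m > 0 \<and> 6 dvd m) \<or> m mod 12 \<in> {2,3,4})"
  then obtain m :: int where x: "x = pi * of_int m / 6" and m: "(m > 0 \<and> 6 dvd m) \<or> m mod 12 \<in> {2,3,4}" by blast
  define k where "k = m div 12"
  define j where "j = m mod 12"
  have mk: "m = 12 * k + j" unfolding k_def j_def by simp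
  have x2: "x = pi * of_int j / 6 + 2 * pi * of_int k" using x by (subst (asm) mk) (simp add: field_simps)
  show "x \<in> lambda_set"
  proof (cases "m > 0 \<and> 6 dvd m")
    case True
    then obtain i where i: "m = 6 * i" "i > 0" by (auto elim: dvdE)
    have "x = pi * real (nat i)" using i x by simp
    thus ?thesis unfolding lambda_set_iff using i by (metis zero_less_nat_eq)
  next
    case False
    hence "j = 2 \<or> j = 3 \<or> j = 4" using m unfolding j_def by auto
    moreover have "j = 2 \<Longrightarrow> x = pi/3 + 2 * pi * of_int k" using x2 by simp
    moreover have "j = 3 \<Longrightarrow> x = pi/2 + 2 * pi * of_int k" using x2 by simp
    moreover have "j = 4 \<Longrightarrow> x = 2*pi/3 + 2 * pi * of_int k" using x2 by simp
    ultimately show ?thesis unfolding lambda_set_iff by blast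
  qed
qed

lemma pi_m_eq: "pi * of_int m / 6 = pi * of_int m' / 6 \<longleftrightarrow> m = m'"
  by simp

lemma lambda_set_nonzero: "x \<in> lambda_set \<Longrightarrow> x \<noteq> 0"
  unfolding lambda_set_char by auto

lemma lambda_set_neg: "x \<in> lambda_set \<Longrightarrow> - x \<notin> lambda_set"
proof
  assume "x \<in> lambda_set" "- x \<in> lambda_set"
  then obtain m m' :: int where x: "x = pi * of_int m / 6" "(m > 0 \<and> 6 dvd m) \<or> m mod 12 \<in> {2,3,4}"
    and x': "- x = pi * of_int m' / 6" "(m' > 0 \<and> 6 dvd m') \<or> m' mod 12 \<in> {2,3,4}"
    unfolding lambda_set_char by blast
  have "pi * of_int (- m) / 6 = pi * of_int m' / 6" using x x' by simp
  hence mm: "m' = - m" by (simp only: pi_m_eq)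
  have A: "(0 < m \<and> 6 dvd m) \<or> m mod 12 = 2 \<or> m mod 12 = 3 \<or> m mod 12 = 4" using x(2) by auto
  have B: "(0 < - m \<and> 6 dvd (- m)) \<or> (- m) mod 12 = 2 \<or> (- m) mod 12 = 3 \<or> (- m) mod 12 = 4"
    using x'(2) unfolding mm by auto
  show False using A B by presburger
qed

lemma lam_unique:
  assumes l: "l \<in> lambda_set" and l': "l' \<in> lambda_set"
    and eq: "{of_int k * l | k. True} = {of_int k * l' | k::int. True}"
  shows "l = l'"
proof -
  have "l \<in> {of_int k * l' | k::int. True}" using eq[symmetric] by (force intro: exI[of _ 1])
  then obtain j :: int where j: "l = of_int j * l'" by blast
  have "l' \<in> {of_int k * l | k::int. True}" using eq by (force intro: exI[of _ 1])
  then obtain k :: int where k: "l' = of_int k * l" by blast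
  have "l * 1 = l * of_int (j * k)" using j k by (simp add: algebra_simps)
  hence "(of_int (j * k) :: real) = 1" using lambda_set_nonzero[OF l] by (simp only: mult_cancel_left) simp
  hence "j * k = 1" by (metis of_int_eq_1_iff)
  hence "j = 1 \<or> j = -1" by (auto simp: zmult_eq_1_iff)
  moreover have "j \<noteq> -1" using j lambda_set_neg[OF l'] l by auto
  ultimately show ?thesis using j by simp
qed

lemma ordP: "(\<exists>k::int. real q * (pi * of_int m / 6) = 2 * pi * of_int k) \<longleftrightarrow> (12::int) dvd (int q * m)"
proof
  assume "\<exists>k::int. real q * (pi * of_int m / 6) = 2 * pi * of_int k"
  then obtain k :: int where "real q * (pi * of_int m / 6) = 2 * pi * of_int k" by blast
  hence "pi * (of_int (int q * m)) = pi * of_int (12 * k)" by (simp add: field_simps)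
  hence "(of_int (int q * m) :: real) = of_int (12 * k)" by simp
  hence "int q * m = 12 * k" by (simp only: of_int_eq_iff)
  thus "(12::int) dvd (int q * m)" by simp
next
  assume "(12::int) dvd (int q * m)"
  then obtain k where k: "int q * m = 12 * k" by (auto elim: dvdE)
  have "real q * (pi * of_int m / 6) = pi * of_int (int q * m) / 6" by simp
  also have "\<dots> = 2 * pi * of_int k" unfolding k by simp
  finally show "\<exists>k::int. real q * (pi * of_int m / 6) = 2 * pi * of_int k" by blast
qed

lemma ord_props:
  "ord_lam (pi * of_int m / 6) \<ge> 1 \<and> (12::int) dvd (int (ord_lam (pi * of_int m / 6)) * m)"
proof -
  have "1 \<le> (12::nat) \<and> (\<exists>k::int. real 12 * (pi * of_int m / 6) = 2 * pi * of_int k)"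
    by (simp only: ordP) simp
  hence "1 \<le> ord_lam (pi * of_int m / 6) \<and> (\<exists>k::int. real (ord_lam (pi * of_int m / 6)) * (pi * of_int m / 6) = 2 * pi * of_int k)"
    unfolding ord_lam_def by (rule LeastI)
  thus ?thesis by (simp only: ordP)
qed

lemma ord_le: "1 \<le> q \<Longrightarrow> (12::int) dvd (int q * m) \<Longrightarrow> ord_lam (pi * of_int m / 6) \<le> q"
  unfolding ord_lam_def by (rule Least_le) (simp only: ordP)

lemma ord4: "ord_lam (pi * of_int m / 6) = 4 \<Longrightarrow> m mod 12 \<in> {2,3,4} \<Longrightarrow> m mod 12 = 3"
proof -
  assume o: "ord_lam (pi * of_int m / 6) = 4" and mm: "m mod 12 \<in> {2,3,4}"
  have "(12::int) dvd (4 * m)" using ord_props[of m] o by simp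
  moreover have "m mod 12 = 2 \<or> m mod 12 = 3 \<or> m mod 12 = 4" using mm by auto
  ultimately show ?thesis by presburger
qed

lemma ord36: "ord_lam (pi * of_int m / 6) \<in> {3,6} \<Longrightarrow> m mod 12 \<in> {2,3,4} \<Longrightarrow> m mod 12 \<in> {2,4}"
proof -
  assume o: "ord_lam (pi * of_int m / 6) \<in> {3,6}" and mm: "m mod 12 \<in> {2,3,4}"
  have "(12::int) dvd (3 * m) \<or> (12::int) dvd (6 * m)" using ord_props[of m] o by auto
  moreover have "m mod 12 = 2 \<or> m mod 12 = 3 \<or> m mod 12 = 4" using mm by auto
  ultimately have "m mod 12 = 2 \<or> m mod 12 = 4" by presburger
  thus ?thesis by simp
qed

lemma ord6: "6 dvd m \<Longrightarrow> ord_lam (pi * of_int m / 6) \<le> 2"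
  by (rule ord_le) auto

lemma exp_shift: "exp (\<i> * of_real (x + 2 * pi * of_int k)) = exp (\<i> * of_real x)"
proof -
  have "\<i> * of_real (x + 2 * pi * of_int k) = \<i> * of_real x + \<i> * (of_int k * (of_real pi * 2))"
    by (simp add: algebra_simps)
  thus ?thesis by simp
qed

lemma exp_cases:
  assumes "(m > 0 \<and> 6 dvd m) \<or> m mod 12 \<in> {2,3,4}"
  defines "e \<equiv> exp (\<i> * of_real (pi * of_int m / 6))"
  shows "(6 dvd m \<and> (e = 1 \<or> e = -1)) \<or> (m mod 12 = 3 \<and> e = \<i>)
    \<or> (m mod 12 = 2 \<and> e = Complex (1/2) (sqrt 3 / 2))
    \<or> (m mod 12 = 4 \<and> e = Complex (-1/2) (sqrt 3 / 2))"
proof -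
  define k where "k = m div 12"
  have mk: "m = 12 * k + m mod 12" unfolding k_def by simp
  have sh: "pi * of_int m / 6 = pi * of_int (m mod 12) / 6 + 2 * pi * of_int k"
    by (subst mk) (simp add: field_simps)
  have e: "e = exp (\<i> * of_real (pi * of_int (m mod 12) / 6))" unfolding e_def sh exp_shift ..
  have cis: "exp (\<i> * of_real y) = Complex (cos y) (sin y)" for y
    by (simp add: cis_conv_exp[symmetric] complex_eq_iff)
  have ec: "e = Complex (cos (pi * of_int (m mod 12) / 6)) (sin (pi * of_int (m mod 12) / 6))"
    by (simp only: e cis)
  have A: "(0 < m \<and> 6 dvd m) \<or> m mod 12 = 2 \<or> m mod 12 = 3 \<or> m mod 12 = 4" using assms(1) by auto
  have "m mod 12 = 0 \<or> m mod 12 = 6 \<or> m mod 12 = 2 \<or> m mod 12 = 3 \<or> m mod 12 = 4"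
    using A by presburger
  then consider "m mod 12 = 0" | "m mod 12 = 6" | "m mod 12 = 2" | "m mod 12 = 3" | "m mod 12 = 4"
    by blast
  thus ?thesis
  proof cases
    case 1
    have "e = 1" using ec 1 by (simp add: complex_eq_iff)
    moreover have "6 dvd m" using 1 by presburger
    ultimately show ?thesis by simp
  next
    case 2
    have "e = -1" using e 2 by simp
    moreover have "6 dvd m" using 2 by presburger
    ultimately show ?thesis by simp
  next
    case 3
    have "pi * of_int 2 / 6 = pi / 3" by simp
    hence "e = Complex (1/2) (sqrt 3 / 2)" using ec 3 by (simp add: cos_60 sin_60)
    thus ?thesis using 3 by simp
  next
    case 4
    have "pi * of_int 3 / 6 = pi / 2" by simp
    hence "e = \<i>" using ec 4 by (simp add: complex_eq_iff)
    thus ?thesis using 4 by simp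
  next
    case 5
    have "pi * of_int 4 / 6 = pi * 2 / 3" by simp
    moreover have "sin (2*pi/3) = sqrt 3 / 2" using sin_120' by (simp add: mult.commute)
    ultimately have "e = Complex (-1/2) (sqrt 3 / 2)" using ec 5 by (simp add: cos_120)
    thus ?thesis using 5 by simp
  qed
qed



lemma discrete_cyclic:
  fixes G :: "real set"
  assumes add: "\<And>x y. x \<in> G \<Longrightarrow> y \<in> G \<Longrightarrow> x + y \<in> G"
    and neg: "\<And>x. x \<in> G \<Longrightarrow> - x \<in> G"
    and eps: "\<epsilon> > 0" and disc: "\<And>x. x \<in> G \<Longrightarrow> \<bar>x\<bar> < \<epsilon> \<Longrightarrow> x = 0"
    and x0: "x0 \<in> G" "x0 > 0"
  shows "\<exists>s>0. s \<in> G \<and> G = {of_int k * s | k. True}"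
proof -
  have zero: "0 \<in> G" using add[OF x0(1) neg[OF x0(1)]] by simp
  have mult: "of_int k * x \<in> G" if "x \<in> G" for x k
  proof (induction k rule: int_induct[where k = 0])
    case base show ?case using zero by simp
  next
    case (step1 i) thus ?case using add[OF step1(2) that] by (simp add: algebra_simps)
  next
    case (step2 i) thus ?case using add[OF step2(2) neg[OF that]] by (simp add: algebra_simps)
  qed
  define F where "F = {x \<in> G. 0 < x \<and> x \<le> x0}"
  have inj: "inj_on (\<lambda>x. \<lfloor>x / \<epsilon>\<rfloor>) F"
  proof (rule inj_onI)
    fix x y assume x: "x \<in> F" and y: "y \<in> F" and e: "\<lfloor>x / \<epsilon>\<rfloor> = \<lfloor>y / \<epsilon>\<rfloor>"
    have "\<bar>x / \<epsilon> - y / \<epsilon>\<bar> < 1" using e by linarith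
    hence "\<bar>x - y\<bar> / \<epsilon> < 1" using eps by (simp add: diff_divide_distrib[symmetric])
    hence "\<bar>x - y\<bar> < \<epsilon>" using eps by (simp add: divide_less_eq)
    moreover have "x - y \<in> G" using add[of x "- y"] neg x y by (simp add: F_def)
    ultimately have "x - y = 0" using disc by blast
    thus "x = y" by simp
  qed
  have "(\<lambda>x. \<lfloor>x / \<epsilon>\<rfloor>) ` F \<subseteq> {0..\<lfloor>x0 / \<epsilon>\<rfloor>}"
    using eps by (auto simp: F_def intro!: floor_mono divide_right_mono)
  hence "finite ((\<lambda>x. \<lfloor>x / \<epsilon>\<rfloor>) ` F)" by (rule finite_subset) simp
  hence fF: "finite F" using inj by (rule finite_imageD)
  have "x0 \<in> F" using x0 by (simp add: F_def)
  hence FF: "F \<noteq> {}" by auto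
  define s where "s = Min F"
  have sF: "s \<in> F" unfolding s_def using fF FF by (rule Min_in)
  have smin: "\<And>y. y \<in> F \<Longrightarrow> s \<le> y" unfolding s_def using fF by simp
  have s0: "s > 0" "s \<in> G" "s \<le> x0" using sF by (auto simp: F_def)
  have "G = {of_int k * s | k. True}"
  proof
    show "{of_int k * s | k. True} \<subseteq> G" using mult[OF s0(2)] by auto
  next
    show "G \<subseteq> {of_int k * s | k. True}"
    proof
      fix z assume z: "z \<in> G"
      define k where "k = \<lfloor>z / s\<rfloor>"
      define \<rho> where "\<rho> = z - of_int k * s"
      have rG: "\<rho> \<in> G" unfolding \<rho>_def using add[OF z mult[OF s0(2), of "-k"]] by simp
      have r0: "0 \<le> \<rho>" "\<rho> < s" unfolding \<rho>_def k_def using s0(1)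
        using floor_divide_lower[OF s0(1), of z] floor_divide_upper[OF s0(1), of z]
        by (simp_all add: algebra_simps)
      have "\<rho> = 0"
      proof (rule ccontr)
        assume "\<rho> \<noteq> 0"
        hence "\<rho> \<in> F" using r0 rG s0 by (simp add: F_def)
        thus False using smin r0 by fastforce
      qed
      hence "z = of_int k * s" by (simp add: \<rho>_def)
      thus "z \<in> {of_int k * s | k. True}" by blast
    qed
  qed
  thus ?thesis using s0 by blast
qed

lemma cos12:
  fixes t :: real
  assumes "2 * cos t = of_int k"
  shows "\<exists>n::int. t = pi * of_int n / 6"
proof -
  have "\<bar>(of_int k::real)\<bar> = \<bar>2 * cos t\<bar>" using assms by simp
  also have "\<dots> \<le> 2" using abs_cos_le_one[of t] by (simp add: abs_mult)
  finally have "\<bar>of_int k\<bar> \<le> (2::real)" .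
  hence "k \<in> {-2, -1, 0, 1, 2}" by auto
  hence c: "cos t \<in> {-1, -1/2, 0, 1/2, 1}" using assms by auto
  have c3: "cos (3 * t) \<in> {-1, 0, 1}"
  proof -
    consider "cos t = -1" | "cos t = -1/2" | "cos t = 0" | "cos t = 1/2" | "cos t = 1" using c by blast
    thus ?thesis
    proof cases
      case 1 show ?thesis unfolding cos_treble_cos 1 by simp
    next
      case 2 show ?thesis unfolding cos_treble_cos 2 by (simp add: power3_eq_cube)
    next
      case 3 show ?thesis unfolding cos_treble_cos 3 by simp
    next
      case 4 show ?thesis unfolding cos_treble_cos 4 by (simp add: power3_eq_cube)
    next
      case 5 show ?thesis unfolding cos_treble_cos 5 by simp
    qed
  qed
  have c6: "cos (6 * t) \<in> {-1, 1}" using cos_double_cos[of "3 * t"] c3 by auto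
  have "cos (12 * t) = 1" using cos_double_cos[of "6 * t"] c6 by auto
  then obtain n :: int where "12 * t = of_int n * 2 * pi" by (auto simp: cos_one_2pi_int)
  hence "t = pi * of_int n / 6" by (simp add: field_simps)
  thus ?thesis by blast
qed

lemma cos_shift_pi: "(cos (x + pi * of_int j))^2 = (cos x)^2"
  by (simp add: cos_add power2_eq_square)

lemma cos_sixth:
  assumes "m mod 6 = 1 \<or> m mod 6 = 5"
  shows "(cos (pi * of_int m / 6))^2 = 3/4"
proof -
  have c30: "(cos (pi/6))^2 = 3/4" by (simp add: cos_30 power_divide)
  from assms show ?thesis
  proof
    assume "m mod 6 = 1"
    hence "m = 6 * (m div 6) + 1" by presburger
    hence "(of_int m :: real) = 6 * of_int (m div 6) + 1" by (metis of_int_add of_int_mult of_int_numeral of_int_1)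
    hence e: "pi * of_int m / 6 = pi / 6 + pi * of_int (m div 6)"
      by (simp add: field_simps)
    show ?thesis by (simp only: e cos_shift_pi c30)
  next
    assume "m mod 6 = 5"
    hence "m = 6 * (m div 6 + 1) - 1" by presburger
    hence "(of_int m :: real) = 6 * of_int (m div 6 + 1) - 1" by (metis of_int_diff of_int_mult of_int_numeral of_int_1)
    hence e: "pi * of_int m / 6 = - (pi / 6) + pi * of_int (m div 6 + 1)"
      by (simp add: field_simps)
    show ?thesis by (simp only: e cos_shift_pi c30 cos_minus)
  qed
qed

lemma not_sqrt3:
  fixes t :: real
  assumes "2 * cos t = of_int k" "(cos t)^2 = 3/4"
  shows False
proof -
  have "(of_int k :: real)^2 = 3" using assms by (simp flip: assms(1) add: power_mult_distrib)
  hence kk: "k * k = 3" by (metis of_int_eq_iff of_int_numeral of_int_power power2_eq_square)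
  consider "k \<ge> 2" | "k \<le> -2" | "k = -1 \<or> k = 0 \<or> k = 1" by linarith
  thus False
  proof cases
    case 1 hence "k * k \<ge> 2 * 2" by (intro mult_mono) auto
    thus False using kk by simp
  next
    case 2 hence "(-k) * (-k) \<ge> 2 * 2" by (intro mult_mono) auto
    thus False using kk by simp
  next
    case 3 thus False using kk by auto
  qed
qed



lemma comm_lift: "osc_comm (u, zu, 0) (v, zv, 0) = (0, om u v, 0)"
  by (simp add: osc_comm_def osc_mult0 osc_inv0 om_expand algebra_simps)

lemma L_disc:
  assumes "osc_lattice L"
  shows "\<exists>\<epsilon>>0. \<forall>z. (0, z, 0) \<in> L \<longrightarrow> \<bar>z\<bar> < \<epsilon> \<longrightarrow> z = 0"
proof -
  obtain U where U: "open U" "osc_one \<in> U" "L \<inter> U = {osc_one}" using assms by (auto simp: osc_lattice_def)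
  define f :: "real \<Rightarrow> osc" where "f = (\<lambda>z. (0, z, 0))"
  have "continuous_on UNIV f" unfolding f_def by (intro continuous_intros)
  hence o: "open (f -` U)" using U(1) by (rule open_vimage[rotated])
  have "0 \<in> f -` U" using U(2) by (simp add: f_def osc_one_def)
  then obtain \<epsilon> where e: "\<epsilon> > 0" "ball 0 \<epsilon> \<subseteq> f -` U" using o open_contains_ball_eq by blast
  have "\<forall>z. (0, z, 0) \<in> L \<longrightarrow> \<bar>z\<bar> < \<epsilon> \<longrightarrow> z = 0"
  proof (intro allI impI)
    fix z :: real assume zL: "(0, z, 0) \<in> L" and z: "\<bar>z\<bar> < \<epsilon>"
    have "z \<in> ball 0 \<epsilon>" using z by (simp add: dist_real_def)
    hence "(0, z, 0) \<in> U" using e by (auto simp: f_def)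
    hence "(0, z, 0) = osc_one" using zL U(3) by blast
    thus "z = 0" by (simp add: osc_one_def)
  qed
  thus ?thesis using e by blast
qed

lemma L_T_nonzero:
  assumes "osc_lattice L"
  shows "\<exists>d\<in>L. snd (snd d) \<noteq> 0"
proof (rule ccontr)
  assume h: "\<not> (\<exists>d\<in>L. snd (snd d) \<noteq> 0)"
  obtain K where K: "compact K" "\<forall>g. \<exists>l\<in>L. \<exists>k\<in>K. g = osc_mult l k"
    using assms by (auto simp: osc_lattice_def)
  obtain B where B: "\<forall>k\<in>K. norm k \<le> B" using compact_imp_bounded[OF K(1)] by (auto simp: bounded_iff)
  obtain l k where lk: "l \<in> L" "k \<in> K" "(0, 0, B + 1) = osc_mult l k" using K(2) by blast
  have "B + 1 = snd (snd l) + snd (snd k)" using arg_cong[OF lk(3), of "\<lambda>g. snd (snd g)"]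
    by (simp add: osc_tt_mult)
  hence "snd (snd k) = B + 1" using h lk(1) by auto
  moreover have "norm (snd (snd k)) \<le> norm k"
  proof -
    obtain k1 k2 k3 where kk: "k = (k1, k2, k3)" by (cases k) auto
    show ?thesis using norm_snd_le[of k3 k2] norm_snd_le[of "(k2, k3)" k1] unfolding kk by simp
  qed
  ultimately show False using B lk(2) by force
qed

lemma lift_H:
  assumes "x \<in> fst ` (L \<inter> Hset)"
  shows "\<exists>z. (x, z, 0) \<in> L"
proof -
  obtain h where h: "h \<in> L \<inter> Hset" "x = fst h" using assms by blast
  obtain z t where "h = (x, z, t)" using h(2) by (cases h) auto
  thus ?thesis using h(1) by (auto simp: Hset_def)
qed

lemma rot_latt:
  assumes sg: "osc_subgroup L" and d: "d \<in> L" and x: "x \<in> fst ` (L \<inter> Hset)"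
  shows "exp (\<i> * of_real (snd (snd d))) * x \<in> fst ` (L \<inter> Hset)"
proof -
  obtain z where h: "(x, z, 0) \<in> L" using lift_H[OF x] by blast
  have c: "osc_conj d (x, z, 0) \<in> L" unfolding osc_conj_def using sg d h
    by (simp add: subgroup_mult subgroup_inv)
  have "snd (snd (osc_conj d (x, z, 0))) = 0" by (simp add: osc_conj_tt)
  hence "osc_conj d (x, z, 0) \<in> L \<inter> Hset" using c by (simp add: Hset_def)
  moreover have "fst (osc_conj d (x, z, 0)) = exp (\<i> * of_real (snd (snd d))) * x"
    by (simp add: osc_conj_fst)
  ultimately show ?thesis by (metis image_eqI)
qed

lemma Z0_structure:
  assumes lat: "osc_lattice L" and uv: "\<bar>om u v\<bar> = 1" and Lam: "fst ` (L \<inter> Hset) = latt u v"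
  shows "\<exists>r::nat. 0 < r \<and> (\<forall>z. (0, z, 0) \<in> L \<longleftrightarrow> (\<exists>c::int. z = of_int c / real r))"
proof -
  have sg: "osc_subgroup L" using lat by (simp add: osc_lattice_def)
  define Z where "Z = {z. (0::complex, z, 0::real) \<in> L}"
  obtain zu where zu: "(u, zu, 0) \<in> L" using lift_H[of u L] Lam latt_u by blast
  obtain zv where zv: "(v, zv, 0) \<in> L" using lift_H[of v L] Lam latt_v by blast
  have "osc_comm (u, zu, 0) (v, zv, 0) \<in> L" unfolding osc_comm_def using sg zu zv
    by (simp add: subgroup_mult subgroup_inv)
  hence c: "om u v \<in> Z" by (simp add: comm_lift Z_def)
  have add: "x + y \<in> Z" if "x \<in> Z" "y \<in> Z" for x y
    using subgroup_mult[OF sg, of "(0, x, 0)" "(0, y, 0)"] that by (simp add: Z_def osc_mult0)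
  have neg: "- x \<in> Z" if "x \<in> Z" for x
    using subgroup_inv[OF sg, of "(0, x, 0)"] that by (simp add: Z_def osc_inv0)
  have one: "1 \<in> Z"
  proof (cases "om u v \<ge> 0")
    case True thus ?thesis using c uv by simp
  next
    case False hence "om u v = -1" using uv by simp
    thus ?thesis using neg[OF c] by simp
  qed
  obtain \<epsilon> where e: "\<epsilon> > 0" "\<forall>z. (0, z, 0) \<in> L \<longrightarrow> \<bar>z\<bar> < \<epsilon> \<longrightarrow> z = 0" using L_disc[OF lat] by blast
  obtain s where s: "s > 0" "s \<in> Z" "Z = {of_int k * s | k. True}"
    using discrete_cyclic[of Z \<epsilon> 1, OF add neg e(1) _ one] e(2) by (auto simp: Z_def)
  obtain k1 :: int where k1: "1 = of_int k1 * s" using one s(3) by blast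
  have k1p: "k1 > 0" using k1 s(1) by (metis of_int_0_less_iff zero_less_mult_pos2 zero_less_one)
  define r where "r = nat k1"
  have rr: "real r = of_int k1" using k1p by (simp add: r_def)
  have sr: "s = 1 / real r" using k1 rr k1p by (simp add: eq_divide_eq mult.commute)
  have "\<forall>z. (0, z, 0) \<in> L \<longleftrightarrow> (\<exists>c::int. z = of_int c / real r)"
  proof
    fix z
    have "(0, z, 0) \<in> L \<longleftrightarrow> z \<in> Z" by (simp add: Z_def)
    also have "\<dots> \<longleftrightarrow> (\<exists>c::int. z = of_int c * s)" using s(3) by blast
    also have "\<dots> \<longleftrightarrow> (\<exists>c::int. z = of_int c / real r)" by (simp add: sr)
    finally show "(0, z, 0) \<in> L \<longleftrightarrow> (\<exists>c::int. z = of_int c / real r)" .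
  qed
  moreover have "0 < r" using k1p r_def by simp
  ultimately show ?thesis by blast
qed

lemma T_structure:
  assumes lat: "osc_lattice L" and uv: "\<bar>om u v\<bar> = 1" and Lam: "fst ` (L \<inter> Hset) = latt u v"
  shows "\<exists>lam. lam \<in> lambda_set \<and> (\<lambda>g. snd (snd g)) ` L = {of_int k * lam | k. True}"
proof -
  have sg: "osc_subgroup L" using lat by (simp add: osc_lattice_def)
  define T where "T = (\<lambda>g. snd (snd g)) ` L"
  have add: "x + y \<in> T" if xyT: "x \<in> T" "y \<in> T" for x y
  proof -
    obtain g h where "g \<in> L" "h \<in> L" "x = snd (snd g)" "y = snd (snd h)" using xyT unfolding T_def by blast
    thus ?thesis using subgroup_mult[OF sg] osc_tt_mult unfolding T_def by (metis image_eqI)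
  qed
  have neg: "- x \<in> T" if xT: "x \<in> T" for x
  proof -
    obtain g where "g \<in> L" "x = snd (snd g)" using xT unfolding T_def by blast
    thus ?thesis using subgroup_inv[OF sg] osc_tt_inv unfolding T_def by (metis image_eqI)
  qed
  have cosZ: "\<exists>k::int. 2 * cos t = of_int k" if tT: "t \<in> T" for t
  proof -
    obtain d where d: "d \<in> L" "t = snd (snd d)" using tT unfolding T_def by blast
    define e where "e = exp (\<i> * of_real t)"
    have eu: "e * u \<in> latt u v" using rot_latt[OF sg d(1), of u] Lam latt_u d(2) by (simp add: e_def)
    have ev: "e * v \<in> latt u v" using rot_latt[OF sg d(1), of v] Lam latt_v d(2) by (simp add: e_def)
    obtain k1 where k1: "om (e * u) v = of_int k1" using latt_int[OF uv eu latt_v] by blast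
    obtain k2 where k2: "om u (e * v) = of_int k2" using latt_int[OF uv latt_u ev] by blast
    have Re: "Re e = cos t" by (simp add: e_def Re_exp)
    have "2 * cos t * om u v = of_int (k1 + k2)" using om_trace[of e u v] k1 k2 Re by simp
    moreover have "om u v = 1 \<or> om u v = -1" using uv by auto
    ultimately have "2 * cos t = of_int (k1 + k2) \<or> 2 * cos t = of_int (- (k1 + k2))" by auto
    thus ?thesis by blast
  qed
  have Tsix: "\<exists>n::int. t = pi * of_int n / 6" if "t \<in> T" for t
    using cosZ[OF that] cos12 by blast
  have disc: "x = 0" if xT: "x \<in> T" "\<bar>x\<bar> < pi / 6" for x
  proof -
    obtain n :: int where n: "x = pi * of_int n / 6" using Tsix[OF xT(1)] by blast
    have "\<bar>of_int n\<bar> * pi / 6 < 1 * pi / 6" using xT(2) n by (simp add: abs_mult)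
    hence "\<bar>(of_int n::real)\<bar> < 1" by (simp add: divide_less_cancel)
    hence "n = 0" by linarith
    thus ?thesis using n by simp
  qed
  obtain d where d: "d \<in> L" "snd (snd d) \<noteq> 0" using L_T_nonzero[OF lat] by blast
  have dT: "snd (snd d) \<in> T" using d by (auto simp: T_def)
  have "\<exists>x0. x0 \<in> T \<and> x0 > 0"
  proof (cases "snd (snd d) > 0")
    case True thus ?thesis using dT by blast
  next
    case False hence "- snd (snd d) > 0" using d(2) by simp
    thus ?thesis using neg[OF dT] by blast
  qed
  then obtain x0 where x0: "x0 \<in> T" "x0 > 0" by blast
  obtain s where s: "s > 0" "s \<in> T" "T = {of_int k * s | k. True}"
    using discrete_cyclic[of T "pi/6" x0, OF add neg _ disc x0] by auto
  obtain m0 :: int where m0: "s = pi * of_int m0 / 6" using Tsix[OF s(2)] by blast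
  have m0p: "m0 > 0" using s(1) m0 by (simp add: zero_less_mult_iff)
  have m6: "\<not> (m0 mod 6 = 1 \<or> m0 mod 6 = 5)"
  proof
    assume "m0 mod 6 = 1 \<or> m0 mod 6 = 5"
    hence "(cos (pi * of_int m0 / 6))^2 = 3/4" by (rule cos_sixth)
    hence "(cos s)^2 = 3/4" by (simp only: m0)
    moreover obtain k where "2 * cos s = of_int k" using cosZ[OF s(2)] by blast
    ultimately show False using not_sqrt3 by blast
  qed
  show ?thesis
  proof (cases "m0 mod 12 \<in> {8, 9, 10}")
    case False
    have n: "m0 mod 12 \<noteq> 8" "m0 mod 12 \<noteq> 9" "m0 mod 12 \<noteq> 10" using False by auto
    have "6 dvd m0 \<or> m0 mod 12 = 2 \<or> m0 mod 12 = 3 \<or> m0 mod 12 = 4" using n m6 by presburger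
    hence "(m0 > 0 \<and> 6 dvd m0) \<or> m0 mod 12 \<in> {2,3,4}" using m0p by auto
    hence "s \<in> lambda_set" unfolding lambda_set_char using m0 by blast
    thus ?thesis using s(3) T_def by blast
  next
    case True
    have "m0 mod 12 = 8 \<or> m0 mod 12 = 9 \<or> m0 mod 12 = 10" using True by simp
    hence "(- m0) mod 12 = 4 \<or> (- m0) mod 12 = 3 \<or> (- m0) mod 12 = 2" by presburger
    hence "(- m0) mod 12 \<in> {2,3,4}" by auto
    moreover have "- s = pi * of_int (- m0) / 6" using m0 by simp
    ultimately have "- s \<in> lambda_set" unfolding lambda_set_char by blast
    moreover have "T = {of_int k * (- s) | k. True}"
      unfolding s(3)
    proof (intro equalityI subsetI)
      fix x assume "x \<in> {of_int k * s |k. True}"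
      then obtain k :: int where "x = of_int k * s" by blast
      hence "x = of_int (- k) * (- s)" by simp
      thus "x \<in> {of_int k * (- s) |k. True}" by blast
    next
      fix x assume "x \<in> {of_int k * (- s) |k. True}"
      then obtain k :: int where "x = of_int k * (- s)" by blast
      hence "x = of_int (- k) * s" by simp
      thus "x \<in> {of_int k * s |k. True}" by blast
    qed
    ultimately show ?thesis using T_def by blast
  qed
qed



definition rotm :: "complex \<Rightarrow> real^2^2" where
  "rotm c = vector [vector [Re c, - Im c], vector [Im c, Re c]]"

lemma rotm_nth: "rotm c $ 1 $ 1 = Re c" "rotm c $ 1 $ 2 = - Im c" "rotm c $ 2 $ 1 = Im c" "rotm c $ 2 $ 2 = Re c"
  by (simp_all add: rotm_def)

lemma rot_rotm: "rot (rotm c) x = c * x"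
  by (simp add: rot_def matrix_vector_mult_def sum_2 rotm_nth complex_eq_iff)

lemma rotm_SO2: assumes "cmod c = 1" shows "rotm c \<in> SO2"
proof -
  have n: "Re c * Re c + Im c * Im c = 1" using assms by (simp add: cmod_def power2_eq_square)
  have "transpose (rotm c) ** rotm c = mat 1"
    by (simp add: vec_eq_iff forall_2 matrix_matrix_mult_def transpose_def mat_def sum_2 rotm_nth n)
  hence "orthogonal_matrix (rotm c)" by (simp add: orthogonal_matrix)
  moreover have "det (rotm c) = 1" using n by (simp add: det_2 rotm_nth power2_eq_square)
  ultimately show ?thesis by (simp add: SO2_def)
qed

lemma F_S_rotm: "F_S (rotm c) g = (c * fst g, snd g)"
  by (cases g) (simp add: F_S_def rot_rotm)



definition Fc :: "complex \<Rightarrow> osc \<Rightarrow> osc" where "Fc c g = (c * fst g, snd g)"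

lemma Fc_simp[simp]: "Fc c (x, z, t) = (c * x, z, t)" by (simp add: Fc_def)

lemma Fc_mult: assumes c: "cmod c = 1" shows "Fc c (osc_mult g h) = osc_mult (Fc c g) (Fc c h)"
proof -
  obtain x1 z1 t1 where g: "g = (x1, z1, t1)" by (cases g) auto
  obtain x2 z2 t2 where h: "h = (x2, z2, t2)" by (cases h) auto
  have "om (c * x1) (exp (\<i> * of_real t1) * (c * x2)) = om (c * x1) (c * (exp (\<i> * of_real t1) * x2))"
    by (simp add: ac_simps)
  also have "\<dots> = om x1 (exp (\<i> * of_real t1) * x2)" by (rule om_rot[OF c])
  finally show ?thesis by (simp add: g h osc_mult_simp algebra_simps)
qed

lemma Fc_inv: "Fc c (osc_inv g) = osc_inv (Fc c g)"
  by (cases g) (simp add: osc_inv_simp algebra_simps)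

lemma Fc_one: "Fc c osc_one = osc_one" by (simp add: osc_one_def)

lemma Fc_comp: assumes c: "cmod c = 1" shows "Fc (cnj c) (Fc c g) = g"
proof -
  have "cnj c * c = 1" using complex_norm_square[of c] c by (simp add: mult.commute)
  thus ?thesis by (cases g) (simp add: mult.assoc[symmetric])
qed

lemma Fc_subgroup: assumes c: "cmod c = 1" and sg: "osc_subgroup L" shows "osc_subgroup (Fc c ` L)"
  unfolding osc_subgroup_def
proof (intro conjI ballI)
  show "osc_one \<in> Fc c ` L" using sg Fc_one[of c] subgroup_one by (metis image_eqI)
next
  fix x y assume "x \<in> Fc c ` L" "y \<in> Fc c ` L"
  then obtain g h where "g \<in> L" "h \<in> L" "x = Fc c g" "y = Fc c h" by blast
  thus "osc_mult x y \<in> Fc c ` L" using Fc_mult[OF c] subgroup_mult[OF sg] by (metis image_eqI)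
next
  fix x assume "x \<in> Fc c ` L"
  then obtain g where "g \<in> L" "x = Fc c g" by blast
  thus "osc_inv x \<in> Fc c ` L" using Fc_inv subgroup_inv[OF sg] by (metis image_eqI)
qed

lemma Fc_tt[simp]: "snd (snd (Fc c g)) = snd (snd g)" by (simp add: Fc_def)
lemma Fc_fst[simp]: "fst (Fc c g) = c * fst g" by (simp add: Fc_def)

lemma Fc_inj: assumes "cmod c = 1" shows "inj (Fc c)"
  by (metis Fc_comp[OF assms] injI)

lemma Fc_H: "Fc c ` L \<inter> Hset = Fc c ` (L \<inter> Hset)"
  by (auto simp: Hset_def)

lemma Fc_Z0: assumes "cmod c = 1" shows "(0, z, 0) \<in> Fc c ` L \<longleftrightarrow> (0, z, 0) \<in> L"
proof
  assume "(0, z, 0) \<in> Fc c ` L"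
  then obtain g where "g \<in> L" "(0, z, 0) = Fc c g" by blast
  moreover obtain x z' t where "g = (x, z', t)" by (cases g) auto
  moreover have "c \<noteq> 0" using assms by auto
  ultimately show "(0, z, 0) \<in> L" by auto
next
  assume "(0, z, 0) \<in> L"
  thus "(0, z, 0) \<in> Fc c ` L" by (metis Fc_simp mult_zero_right image_eqI)
qed

lemma Fc_T: "(\<lambda>g. snd (snd g)) ` (Fc c ` L) = (\<lambda>g. snd (snd g)) ` L"
  by (simp add: image_image)

lemma Fc_fstH: "fst ` (Fc c ` L \<inter> Hset) = (\<lambda>x. c * x) ` fst ` (L \<inter> Hset)"
  unfolding Fc_H by (simp add: image_image)



lemma sqrt3_facts: "sqrt 3 * sqrt 3 = (3::real)" "sqrt 3 > (1::real)" "sqrt 3 > (0::real)"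
proof -
  show "sqrt 3 * sqrt 3 = (3::real)" by simp
  have "sqrt 1 < sqrt (3::real)" by (subst real_sqrt_less_iff) simp
  thus "sqrt 3 > (1::real)" by simp
  thus "sqrt 3 > (0::real)" by simp
qed

lemma Fdom_props: assumes "(\<mu>, \<nu>) \<in> Fdom"
  shows "\<nu> > 0" "\<bar>\<mu>\<bar> \<le> 1/2" "\<nu> \<ge> sqrt 3 / 2" "\<mu>^2 + \<nu>^2 \<ge> 1"
proof -
  show n0: "\<nu> > 0" and m: "\<bar>\<mu>\<bar> \<le> 1/2" and s: "\<mu>^2 + \<nu>^2 \<ge> 1" using assms by (auto simp: Fdom_def)
  have "\<mu>^2 \<le> (1/2)^2" using m by (metis abs_le_square_iff power2_abs abs_of_nonneg zero_le_divide_iff zero_le_one zero_le_numeral power_mono abs_ge_zero)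
  hence "\<nu>^2 \<ge> 3/4" using s by (simp add: power_divide)
  hence "sqrt (3/4) \<le> sqrt (\<nu>^2)" by (subst real_sqrt_le_iff) simp
  thus "\<nu> \<ge> sqrt 3 / 2" using n0 by (simp add: real_sqrt_divide)
qed

lemma rot_analysis:
  fixes \<mu> \<nu> :: real and s t :: int
  assumes F: "(\<mu>, \<nu>) \<in> Fdom" and e: "e = of_int s + of_int t * Complex (- \<mu>) \<nu>"
  shows "e = \<i> \<Longrightarrow> \<mu> = 0 \<and> \<nu> = 1"
    and "Im e = sqrt 3 / 2 \<Longrightarrow> \<mu> = 1/2 \<and> \<nu> = sqrt 3 / 2"
proof -
  note Fp = Fdom_props[OF F]
  note s3 = sqrt3_facts
  have Ime: "Im e = of_int t * \<nu>" and Ree: "Re e = of_int s - of_int t * \<mu>" using e by simp_all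
  {
    assume ei: "e = \<i>"
    have tn: "of_int t * \<nu> = 1" using Ime ei by simp
    have tp: "t > 0" using tn Fp(1) by (metis less_numeral_extra(1) of_int_0_less_iff zero_less_mult_pos2)
    have "t = 1"
    proof (rule ccontr)
      assume "t \<noteq> 1" hence "(of_int t :: real) \<ge> 2" using tp by linarith
      hence "of_int t * \<nu> \<ge> 2 * (sqrt 3 / 2)" using Fp(3) s3 by (intro mult_mono) auto
      thus False using tn s3 by simp
    qed
    hence n1: "\<nu> = 1" using tn by simp
    have "of_int s = \<mu>" using Ree ei \<open>t = 1\<close> by simp
    hence "\<bar>(of_int s::real)\<bar> \<le> 1/2" using Fp(2) by simp
    hence "s = 0" by linarith
    thus "\<mu> = 0 \<and> \<nu> = 1" using \<open>of_int s = \<mu>\<close> n1 by simp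
  }
  {
    assume ei: "Im e = sqrt 3 / 2"
    have tn: "of_int t * \<nu> = sqrt 3 / 2" using Ime ei by simp
    have tp: "t > 0" using tn Fp(1) s3 by (metis half_gt_zero of_int_0_less_iff zero_less_mult_pos2)
    have "t = 1"
    proof (rule ccontr)
      assume "t \<noteq> 1" hence "(of_int t :: real) \<ge> 2" using tp by linarith
      hence "of_int t * \<nu> \<ge> 2 * (sqrt 3 / 2)" using Fp(3) s3 by (intro mult_mono) auto
      thus False using tn s3 by simp
    qed
    hence n1: "\<nu> = sqrt 3 / 2" using tn by simp
    hence nn: "\<nu>^2 = 3/4" unfolding n1 by (simp add: power_divide)
    have "\<mu> = 1/2"
    proof (cases "\<mu> \<ge> 0")
      case True
      have m2: "\<mu>^2 \<ge> 1/4" using Fp(4) nn by simp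
      have "\<mu> \<ge> 1/2"
      proof (rule ccontr)
        assume "\<not> \<mu> \<ge> 1/2"
        hence "\<mu> * \<mu> < 1/2 * (1/2)" using True by (intro mult_strict_mono') auto
        thus False using m2 by (simp add: power2_eq_square)
      qed
      thus ?thesis using Fp(2) True by simp
    next
      case False
      hence m: "- 1/2 < \<mu>" "\<mu> < 0" "\<mu>^2 + \<nu>^2 > 1" using F by (auto simp: Fdom_def)
      have "(-\<mu>) * (-\<mu>) < 1/2 * (1/2)" using m by (intro mult_strict_mono') auto
      thus ?thesis using m(3) nn by (simp add: power2_eq_square)
    qed
    thus "\<mu> = 1/2 \<and> \<nu> = sqrt 3 / 2" using n1 by simp
  }
qed

lemma mat_exists:
  assumes b: "b' = a' * w"
    and cases: "e = 1 \<or> e = -1 \<or> (e = \<i> \<and> w = \<i>)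
      \<or> (e = Complex (1/2) (sqrt 3 / 2) \<and> w = Complex (-1/2) (sqrt 3 / 2))
      \<or> (e = Complex (-1/2) (sqrt 3 / 2) \<and> w = Complex (-1/2) (sqrt 3 / 2))"
  shows "\<exists>m11 m12 m21 m22. (m11, m12, m21, m22) \<in> allowed_mats
     \<and> e * a' = of_int m11 * a' + of_int m21 * b' \<and> e * b' = of_int m12 * a' + of_int m22 * b'"
proof -
  note s3 = sqrt3_facts
  from cases consider "e = 1" | "e = -1" | "e = \<i> \<and> w = \<i>"
    | "e = Complex (1/2) (sqrt 3 / 2) \<and> w = Complex (-1/2) (sqrt 3 / 2)"
    | "e = Complex (-1/2) (sqrt 3 / 2) \<and> w = Complex (-1/2) (sqrt 3 / 2)" by blast
  thus ?thesis
  proof cases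
    case 1 thus ?thesis by (intro exI[of _ 1] exI[of _ 0]) (simp add: allowed_mats_def)
  next
    case 2 thus ?thesis by (intro exI[of _ "-1"] exI[of _ 0]) (simp add: allowed_mats_def)
  next
    case 3
    have "e * a' = of_int 0 * a' + of_int 1 * b'" "e * b' = of_int (-1) * a' + of_int 0 * b'"
      using 3 b by (simp_all add: algebra_simps)
    moreover have "(0, -1, 1, 0) \<in> allowed_mats" by (simp add: allowed_mats_def)
    ultimately show ?thesis by blast
  next
    case 4
    have he: "e = Complex (1/2) (sqrt 3 / 2)" and hw: "w = Complex (-1/2) (sqrt 3 / 2)" using 4 by auto
    have w1: "e = 1 + w" "e * w = -1" unfolding he hw using s3 by (simp_all add: complex_eq_iff)
    have "e * a' = of_int 1 * a' + of_int 1 * b'" using w1 b by (simp add: algebra_simps)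
    moreover have "e * b' = of_int (-1) * a' + of_int 0 * b'" using w1 b
      by (simp add: algebra_simps)
    moreover have "(1, -1, 1, 0) \<in> allowed_mats" by (simp add: allowed_mats_def)
    ultimately show ?thesis by blast
  next
    case 5
    have he: "e = Complex (-1/2) (sqrt 3 / 2)" and hw: "w = Complex (-1/2) (sqrt 3 / 2)" using 5 by auto
    have w1: "e = w" "e * w = -1 - w" unfolding he hw using s3 by (simp_all add: complex_eq_iff)
    have "e * a' = of_int 0 * a' + of_int 1 * b'" using w1 b by (simp add: algebra_simps)
    moreover have "e * b' = of_int (-1) * a' + of_int (-1) * b'"
    proof -
      have "e * b' = a' * (e * w)" using b by (simp add: ac_simps)
      also have "\<dots> = a' * (-1 - w)" using w1(2) by simp
      also have "\<dots> = - a' - b'" using b by (simp add: algebra_simps)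
      finally show ?thesis by simp
    qed
    moreover have "(0, -1, 1, -1) \<in> allowed_mats" by (simp add: allowed_mats_def)
    ultimately show ?thesis by blast
  qed
qed



lemma lambda_of_eq:
  assumes lam: "lam \<in> lambda_set" and T: "(\<lambda>g. snd (snd g)) ` L = {of_int k * lam | k. True}"
  shows "lambda_of L = lam"
  unfolding lambda_of_def
proof (rule the_equality)
  show "lam \<in> lambda_set \<and> (\<lambda>g. snd (snd g)) ` L = {of_int k * lam | k. True}" using lam T by blast
next
  fix l assume h: "l \<in> lambda_set \<and> (\<lambda>g. snd (snd g)) ` L = {of_int k * l | k. True}"
  have "{of_int k * l | k. True} = {of_int k * lam | k::int. True}"
    using trans[OF sym[OF conjunct2[OF h]] T] .
  thus "l = lam" using lam_unique[OF conjunct1[OF h] lam] by blast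
qed

theorem lemma4p17:
  fixes L :: "osc set"
  assumes "osc_lattice L" and "normalised L"
  shows "\<exists>S\<in>SO2. \<exists>z\<alpha> z\<beta> \<mu> \<nu>.
    (\<mu>, \<nu>) \<in> Fdom
    \<and> (ord_lam (lambda_of L) = 4 \<longrightarrow> Complex \<mu> \<nu> = \<i>)
    \<and> (ord_lam (lambda_of L) \<in> {3, 6} \<longrightarrow> Complex \<mu> \<nu> = exp (\<i> * of_real (pi / 3)))
    \<and> (let \<alpha> = (complex_of_real (1 / sqrt \<nu>), z\<alpha>, 0);
           \<beta> = (Complex (- \<mu> / sqrt \<nu>) (sqrt \<nu>), z\<beta>, 0);
           \<gamma> = (0, 1 / real (r_of L), 0);
           L' = F_S S ` L
       in (\<exists>\<delta>. osc_gen {\<alpha>, \<beta>, \<gamma>, \<delta>} = L')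
        \<and> (\<forall>\<delta>\<in>L'. snd (snd \<delta>) = lambda_of L \<longrightarrow> adapted L' \<alpha> \<beta> \<gamma> \<delta>))"
proof -
  have lat: "osc_lattice L" by fact
  have sg: "osc_subgroup L" using lat by (simp add: osc_lattice_def)
  obtain u v where Lam: "fst ` (L \<inter> Hset) = latt u v" and uv: "\<bar>om u v\<bar> = 1"
    using assms(2) unfolding normalised_def latt_def om_def by blast
  obtain r :: nat where r: "0 < r" and Z0: "\<forall>z. (0, z, 0) \<in> L \<longleftrightarrow> (\<exists>c::int. z = of_int c / real r)"
    using Z0_structure[OF lat uv Lam] by blast
  obtain lam where lam: "lam \<in> lambda_set" and T: "(\<lambda>g. snd (snd g)) ` L = {of_int k * lam | k. True}"
    using T_structure[OF lat uv Lam] by blast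
  have lamL: "lambda_of L = lam" using lambda_of_eq[OF lam T] .
  obtain a b \<mu> \<nu> where aL: "a \<in> latt u v" and bL: "b \<in> latt u v" and ab: "om a b = 1"
    and bw: "b = a * Complex (- \<mu>) \<nu>" and F: "(\<mu>, \<nu>) \<in> Fdom"
    using reduction[OF uv] by blast
  have Lab: "latt u v = latt a b" using latt_basis[OF uv aL bL ab] .
  note Fp = Fdom_props[OF F]
  define w where "w = Complex (- \<mu>) \<nu>"
  have a0: "a \<noteq> 0" using ab by (auto simp: om_def)
  have caa: "cnj a * a = complex_of_real ((cmod a)^2)"
    using complex_norm_square[of a] by (simp add: mult.commute)
  have na: "(cmod a)^2 * \<nu> = 1"
  proof -
    have "om a b = Im ((cnj a * a) * w)" by (simp add: om_def bw w_def mult.assoc)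
    also have "\<dots> = (cmod a)^2 * \<nu>" unfolding caa by (simp add: w_def)
    finally show ?thesis using ab by simp
  qed
  have sn: "sqrt \<nu> > 0" using Fp(1) by simp
  have cma: "cmod a = 1 / sqrt \<nu>"
  proof -
    have "(cmod a)^2 = 1 / \<nu>" using na Fp(1) by (simp add: field_simps)
    hence "sqrt ((cmod a)^2) = sqrt (1 / \<nu>)" by simp
    thus ?thesis by (simp add: real_sqrt_divide)
  qed
  define c where "c = cnj a / complex_of_real (cmod a)"
  have cn: "cmod c = 1" using a0 by (simp add: c_def norm_divide)
  define a' where "a' = complex_of_real (1 / sqrt \<nu>)"
  define b' where "b' = Complex (- \<mu> / sqrt \<nu>) (sqrt \<nu>)"
  have ca: "c * a = a'"
  proof -
    have "c * a = (cnj a * a) / complex_of_real (cmod a)"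
      by (simp add: c_def)
    hence "c * a = complex_of_real ((cmod a)^2) / complex_of_real (cmod a)"
      by (simp only: caa)
    also have "\<dots> = complex_of_real (cmod a)" using a0 by (simp add: power2_eq_square)
    finally show ?thesis by (simp add: a'_def cma)
  qed
  have b'w: "b' = a' * w"
  proof -
    have "\<nu> / sqrt \<nu> = sqrt \<nu>" using Fp(1) by (metis real_div_sqrt less_imp_le)
    thus ?thesis by (simp add: a'_def b'_def w_def complex_eq_iff)
  qed
  have cb: "c * b = b'" using ca b'w by (simp add: bw w_def mult.assoc[symmetric])
  have a'0: "a' \<noteq> 0" using sn by (simp add: a'_def)
  define L' where "L' = F_S (rotm c) ` L"
  have L'c: "L' = Fc c ` L" unfolding L'_def by (simp add: F_S_rotm Fc_def)
  have sg': "osc_subgroup L'" unfolding L'c by (rule Fc_subgroup[OF cn sg])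
  have Lam': "fst ` (L' \<inter> Hset) = latt a' b'"
  proof -
    have "fst ` (L' \<inter> Hset) = (\<lambda>x. c * x) ` latt a b" unfolding L'c Fc_fstH Lam Lab ..
    also have "\<dots> = latt a' b'"
    proof
      show "(\<lambda>x. c * x) ` latt a b \<subseteq> latt a' b'"
      proof
        fix y assume "y \<in> (\<lambda>x. c * x) ` latt a b"
        then obtain s t where "y = c * (of_int s * a + of_int t * b)" by (auto simp: latt_def)
        hence "y = of_int s * (c * a) + of_int t * (c * b)" by (simp add: algebra_simps)
        hence "y = of_int s * a' + of_int t * b'" unfolding ca cb .
        thus "y \<in> latt a' b'" unfolding latt_def by blast
      qed
    next
      show "latt a' b' \<subseteq> (\<lambda>x. c * x) ` latt a b"
      proof
        fix y assume "y \<in> latt a' b'"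
        then obtain s t where "y = of_int s * a' + of_int t * b'" by (auto simp: latt_def)
        hence "y = of_int s * (c * a) + of_int t * (c * b)" unfolding ca cb .
        hence "y = c * (of_int s * a + of_int t * b)" by (simp add: algebra_simps)
        moreover have "of_int s * a + of_int t * b \<in> latt a b" unfolding latt_def by blast
        ultimately show "y \<in> (\<lambda>x. c * x) ` latt a b" by blast
      qed
    qed
    finally show ?thesis .
  qed
  have om': "om a' b' = 1" using om_rot[OF cn, of a b] ab ca cb by simp
  have Z0': "(0, z, 0) \<in> L' \<longleftrightarrow> (\<exists>c::int. z = of_int c / real r)" for z
    unfolding L'c Fc_Z0[OF cn] using Z0 by blast
  have T': "(\<lambda>g. snd (snd g)) ` L' = {of_int k * lam | k. True}" unfolding L'c Fc_T T ..
  have a'L: "a' \<in> latt a' b'" by (rule latt_u)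
  have b'L: "b' \<in> latt a' b'" by (rule latt_v)
  obtain za where za: "(a', za, 0) \<in> L'" using lift_H[of a' L'] Lam' a'L by blast
  obtain zb where zb: "(b', zb, 0) \<in> L'" using lift_H[of b' L'] Lam' b'L by blast
  interpret G: good L' a' b' za zb r
    by unfold_locales (use sg' r Z0' Lam' om' za zb in \<open>auto simp: latt_def\<close>)
  have rL: "r_of L = r"
  proof (rule r_of_eq[OF r])
    have cn': "cmod (cnj c) = 1" using cn by simp
    have "bij_betw (Fc (cnj c)) (L' \<inter> Hset) (L \<inter> Hset)"
    proof (rule bij_betw_imageI)
      show "inj_on (Fc (cnj c)) (L' \<inter> Hset)" by (rule inj_on_subset[OF Fc_inj[OF cn']]) simp
      show "Fc (cnj c) ` (L' \<inter> Hset) = L \<inter> Hset" unfolding L'c Fc_H image_image Fc_comp[OF cn] by simp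
    qed
    thus "bij_betw (Fc (cnj c) \<circ> G.g) UNIV (L \<inter> Hset)" by (rule bij_betw_trans[OF G.g_bij])
    show "\<And>x y. (Fc (cnj c) \<circ> G.g) (heis_mult r x y) = osc_mult ((Fc (cnj c) \<circ> G.g) x) ((Fc (cnj c) \<circ> G.g) y)"
      by (simp add: G.g_hom Fc_mult[OF cn'])
  qed
  have lamL': "lambda_of L' = lam" using lambda_of_eq[OF lam T'] .
  obtain m :: int where m: "lam = pi * of_int m / 6" and mc: "(m > 0 \<and> 6 dvd m) \<or> m mod 12 \<in> {2,3,4}"
    using lam unfolding lambda_set_char by blast
  define e where "e = exp (\<i> * of_real lam)"
  have "lam \<in> (\<lambda>g. snd (snd g)) ` L'" unfolding T' by (force intro: exI[of _ 1])
  then obtain d0 where d0: "d0 \<in> L'" "snd (snd d0) = lam" by blast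
  have "e * a' \<in> latt a' b'" using rot_latt[OF sg' d0(1), of a'] Lam' a'L d0(2) by (simp add: e_def)
  then obtain s t where st: "e * a' = of_int s * a' + of_int t * b'" unfolding latt_def by blast
  have ew: "e = of_int s + of_int t * Complex (- \<mu>) \<nu>"
  proof -
    have "e * a' = (of_int s + of_int t * w) * a'" using st b'w by (simp add: algebra_simps)
    thus ?thesis using a'0 by (simp add: w_def)
  qed
  have ec: "(6 dvd m \<and> (e = 1 \<or> e = -1)) \<or> (m mod 12 = 3 \<and> e = \<i>)
    \<or> (m mod 12 = 2 \<and> e = Complex (1/2) (sqrt 3 / 2))
    \<or> (m mod 12 = 4 \<and> e = Complex (-1/2) (sqrt 3 / 2))"
    unfolding e_def m by (rule exp_cases[OF mc])
  have case3: "\<mu> = 0 \<and> \<nu> = 1" if "m mod 12 = 3"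
  proof -
    have "\<not> 6 dvd m" using that by presburger
    hence "e = \<i>" using ec that by auto
    thus ?thesis using rot_analysis(1)[OF F ew] by blast
  qed
  have case24: "\<mu> = 1/2 \<and> \<nu> = sqrt 3 / 2" if "m mod 12 = 2 \<or> m mod 12 = 4"
  proof -
    have "\<not> 6 dvd m" using that by presburger
    hence "Im e = sqrt 3 / 2" using ec that by auto
    thus ?thesis using rot_analysis(2)[OF F ew] by blast
  qed
  have ord_m: "m mod 12 \<in> {2,3,4}" if "ord_lam lam \<in> {3,4,6}"
  proof (rule ccontr)
    assume "m mod 12 \<notin> {2,3,4}"
    hence "6 dvd m" using mc by auto
    hence "ord_lam lam \<le> 2" unfolding m by (rule ord6)
    thus False using that by auto
  qed
  have O4: "Complex \<mu> \<nu> = \<i>" if "ord_lam (lambda_of L) = 4"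
  proof -
    have o: "ord_lam (pi * of_int m / 6) = 4" using that lamL m by simp
    have "m mod 12 \<in> {2,3,4}" using ord_m that lamL by simp
    hence "m mod 12 = 3" using ord4[OF o] by simp
    thus ?thesis using case3 by (simp add: complex_eq_iff)
  qed
  have O36: "Complex \<mu> \<nu> = exp (\<i> * of_real (pi / 3))" if "ord_lam (lambda_of L) \<in> {3, 6}"
  proof -
    have o: "ord_lam (pi * of_int m / 6) \<in> {3,6}" using that lamL m by simp
    have "m mod 12 \<in> {2,3,4}" using ord_m that lamL by auto
    hence "m mod 12 = 2 \<or> m mod 12 = 4" using ord36[OF o] by simp
    hence mn: "\<mu> = 1/2 \<and> \<nu> = sqrt 3 / 2" using case24 by blast
    have "exp (\<i> * of_real (pi / 3)) = cis (pi / 3)"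
      by (simp only: cis_conv_exp)
    hence "exp (\<i> * of_real (pi / 3)) = Complex (cos (pi/3)) (sin (pi/3))"
      by (simp add: complex_eq_iff)
    thus ?thesis using mn by (simp add: cos_60 sin_60)
  qed
  obtain m11 m12 m21 m22 where M: "(m11, m12, m21, m22) \<in> allowed_mats"
    and e1: "e * a' = of_int m11 * a' + of_int m21 * b'" and e2: "e * b' = of_int m12 * a' + of_int m22 * b'"
  proof -
    have "e = 1 \<or> e = -1 \<or> (e = \<i> \<and> w = \<i>)
      \<or> (e = Complex (1/2) (sqrt 3 / 2) \<and> w = Complex (-1/2) (sqrt 3 / 2))
      \<or> (e = Complex (-1/2) (sqrt 3 / 2) \<and> w = Complex (-1/2) (sqrt 3 / 2))"
      using ec case3 case24 by (auto simp: w_def complex_eq_iff)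
    from mat_exists[OF b'w this] show ?thesis using that by blast
  qed
  have adapt: "adapted L' (a', za, 0) (b', zb, 0) (0, 1 / real r, 0) d"
    if "d \<in> L'" "snd (snd d) = lambda_of L" for d
    using G.adapted_good[OF T' lamL' that(1) _ M] that(2) lamL e1 e2 by (simp add: e_def)
  have gen: "\<exists>\<delta>. osc_gen {(a', za, 0), (b', zb, 0), (0, 1 / real r, 0), \<delta>} = L'"
  proof -
    have "adapted L' (a', za, 0) (b', zb, 0) (0, 1 / real r, 0) d0" using adapt[OF d0(1)] d0(2) lamL by simp
    hence "osc_gen {(a', za, 0), (b', zb, 0), (0, 1 / real r, 0), d0} = L'" unfolding adapted_def by (rule conjunct1)
    thus ?thesis by blast
  qed
  show ?thesis
    apply (rule bexI[of _ "rotm c"])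
     apply (rule exI[of _ za], rule exI[of _ zb], rule exI[of _ \<mu>], rule exI[of _ \<nu>])
    using F O4 O36 gen adapt rotm_SO2[OF cn]
    unfolding Let_def rL L'_def[symmetric] a'_def[symmetric] b'_def[symmetric]
    by auto
qed

end
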